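(* Let $\lambda,\mu\in[0,\infty)$ and let $\Phi$ be a local interaction on $V$ with $$\|\Phi\|:=\|\Phi\|_{\lambda,\mu}=\sup_{x\in V}\sum_{X\ni x}\|\Phi_X\|\,e^{\lambda|X|+\mu\operatorname{diam}(X)}<\infty .$$ Let $Q$ be an observable supported in a finite subset $Z\subset V$. If $Y\subset V$ is finite, then for every $s\in\mathbb C$ with $|s|<\lambda/(2\|\Phi\|)$, $$\|\Gamma^s_{H_Y}(Q)\|\le \|Q\|\,e^{\lambda|Z|}\,\frac{\lambda}{\lambda-2\|\Phi\|\,|s|}.$$ Moreover, if $Y'\subset V$ is finite and $Z\subset Y\subset Y'$, then for every $s\in\mathbb C$ with $|s|<\lambda/(2\|\Phi\|)$, $$\big\|\Gamma^s_{H_{Y'}}(Q)-\Gamma^s_{H_Y}(Q)\big\|\le \|Q\|\,e^{\lambda|Z|}\,\frac{2\|\Phi\|\,|s|\,\lambda}{(\lambda-2\|\Phi\|\,|s|)^2}\,e^{-\mu\operatorname{dist}(Z,V\setminus Y)}.$$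
   Context: $V$ is a (possibly infinite) set equipped with a metric $\operatorname{dist}$ (e.g. the vertex set of a graph with shortest-path distance); for $X,Y\subset V$, $\operatorname{dist}(X,Y)=\inf_{x\in X,y\in Y}\operatorname{dist}(x,y)$, and for finite $X$, $\operatorname{diam}(X)=\max_{x,y\in X}\operatorname{dist}(x,y)$. Each site carries $\mathbb C^D$; for finite $X\subset V$, $\mathcal H_X=\bigotimes_{v\in X}\mathbb C^D$ and $\mathfrak A_X=\mathcal B(\mathcal H_X)$, with $\mathfrak A_X\subset\mathfrak A_Y$ for $X\subset Y$ via $Q\mapsto Q\otimes\mathbb 1_{Y\setminus X}$. An observable is supported in $X$ if it belongs to $\mathfrak A_X$. A local interaction is a family $\Phi=(\Phi_X)_X$ indexed by finite subsets $X\subset V$ with $\Phi_X=\Phi_X^*\in\mathfrak A_X$. For finite $Y$, $H_Y=\sum_{X\subset Y}\Phi_X$, and $\Gamma^s_{H_Y}(Q)=e^{isH_Y}Qe^{-isH_Y}$ for $s\in\mathbb C$. $\|\cdot\|$ is the operator norm. *)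

theory Defs
  imports "HOL-Analysis.Analysis"
begin

text \<open>Configurations of the sites in X: basis of H_X = tensor product of C^D over X.
  A configuration is a function 'v => nat with values < D on X and 0 outside X.\<close>
type_synonym 'v cfg = "'v \<Rightarrow> nat"
text \<open>Operators are represented by their matrix entries w.r.t. the product basis.\<close>
type_synonym 'v mat = "'v cfg \<Rightarrow> 'v cfg \<Rightarrow> complex"

definition cfgs :: "nat \<Rightarrow> 'v set \<Rightarrow> 'v cfg set" where
  "cfgs D X = {\<sigma>. (\<forall>v\<in>X. \<sigma> v < D) \<and> (\<forall>v. v \<notin> X \<longrightarrow> \<sigma> v = 0)}"

definition restr :: "'v set \<Rightarrow> 'v cfg \<Rightarrow> 'v cfg" where
  "restr X \<sigma> = (\<lambda>v. if v \<in> X then \<sigma> v else 0)"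

text \<open>Embedding A_X into A_W (X subset W): A maps to A tensor identity on W - X.\<close>
definition emb :: "'v set \<Rightarrow> 'v mat \<Rightarrow> 'v mat" where
  "emb X A = (\<lambda>\<sigma> \<tau>. if (\<forall>v. v \<notin> X \<longrightarrow> \<sigma> v = \<tau> v)
                     then A (restr X \<sigma>) (restr X \<tau>) else 0)"

definition mmul :: "nat \<Rightarrow> 'v set \<Rightarrow> 'v mat \<Rightarrow> 'v mat \<Rightarrow> 'v mat" where
  "mmul D W A B = (\<lambda>\<sigma> \<tau>. \<Sum>\<rho>\<in>cfgs D W. A \<sigma> \<rho> * B \<rho> \<tau>)"

definition mone :: "'v mat" where
  "mone = (\<lambda>\<sigma> \<tau>. if \<sigma> = \<tau> then 1 else 0)"

fun mpow :: "nat \<Rightarrow> 'v set \<Rightarrow> 'v mat \<Rightarrow> nat \<Rightarrow> 'v mat" where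
  "mpow D W A 0 = mone"
| "mpow D W A (Suc n) = mmul D W A (mpow D W A n)"

definition mexp :: "nat \<Rightarrow> 'v set \<Rightarrow> 'v mat \<Rightarrow> 'v mat" where
  "mexp D W A = (\<lambda>\<sigma> \<tau>. \<Sum>n. mpow D W A n \<sigma> \<tau> / of_nat (fact n))"

definition opnorm :: "nat \<Rightarrow> 'v set \<Rightarrow> 'v mat \<Rightarrow> real" where
  "opnorm D W A = Sup {sqrt (\<Sum>\<sigma>\<in>cfgs D W. (cmod (\<Sum>\<tau>\<in>cfgs D W. A \<sigma> \<tau> * \<psi> \<tau>))\<^sup>2) | \<psi>.
                        (\<Sum>\<tau>\<in>cfgs D W. (cmod (\<psi> \<tau>))\<^sup>2) \<le> 1}"

definition ham :: "('v set \<Rightarrow> 'v mat) \<Rightarrow> 'v set \<Rightarrow> 'v mat" where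
  "ham \<Phi> Y = (\<lambda>\<sigma> \<tau>. \<Sum>X\<in>Pow Y. emb X (\<Phi> X) \<sigma> \<tau>)"

definition gam :: "nat \<Rightarrow> 'v set \<Rightarrow> 'v mat \<Rightarrow> complex \<Rightarrow> 'v mat \<Rightarrow> 'v mat" where
  "gam D W H s Q = mmul D W (mmul D W (mexp D W (\<lambda>\<sigma> \<tau>. \<i> * s * H \<sigma> \<tau>)) Q)
                              (mexp D W (\<lambda>\<sigma> \<tau>. - \<i> * s * H \<sigma> \<tau>))"

definition inorm_e :: "nat \<Rightarrow> real \<Rightarrow> real \<Rightarrow> ('v::metric_space set \<Rightarrow> 'v mat) \<Rightarrow> ennreal" where
  "inorm_e D lam mu \<Phi> = (SUP x. \<Sum>\<^sub>\<infinity>X\<in>{X. finite X \<and> x \<in> X}.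
       ennreal (opnorm D X (\<Phi> X) * exp (lam * real (card X) + mu * diameter X)))"

definition inorm :: "nat \<Rightarrow> real \<Rightarrow> real \<Rightarrow> ('v::metric_space set \<Rightarrow> 'v mat) \<Rightarrow> real" where
  "inorm D lam mu \<Phi> = enn2real (inorm_e D lam mu \<Phi>)"

end

theory Submission
  imports Defs
begin


lemma finite_cfgs: "finite W \<Longrightarrow> finite (cfgs D W)"
proof -
  assume W: "finite W"
  have "cfgs D W \<subseteq> (\<lambda>f v. if v \<in> W then f v else 0) ` (PiE W (\<lambda>_. {..<D}))"
  proof
    fix \<sigma> assume s: "\<sigma> \<in> cfgs D W"
    have "restrict \<sigma> W \<in> PiE W (\<lambda>_. {..<D})" using s by (auto simp: cfgs_def)
    moreover have "\<sigma> = (\<lambda>v. if v \<in> W then restrict \<sigma> W v else 0)" using s by (auto simp: cfgs_def)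
    ultimately show "\<sigma> \<in> (\<lambda>f v. if v \<in> W then f v else 0) ` (PiE W (\<lambda>_. {..<D}))" by blast
  qed
  moreover have "finite (PiE W (\<lambda>_. {..<D}))" using W by (simp add: finite_PiE)
  ultimately show ?thesis by (meson finite_imageI finite_subset)
qed



definition vn :: "nat \<Rightarrow> 'v set \<Rightarrow> ('v cfg \<Rightarrow> complex) \<Rightarrow> real" where
  "vn D W \<psi> = sqrt (\<Sum>\<sigma>\<in>cfgs D W. (cmod (\<psi> \<sigma>))\<^sup>2)"

definition app :: "nat \<Rightarrow> 'v set \<Rightarrow> 'v mat \<Rightarrow> ('v cfg \<Rightarrow> complex) \<Rightarrow> ('v cfg \<Rightarrow> complex)" where
  "app D W A \<psi> = (\<lambda>\<sigma>. \<Sum>\<tau>\<in>cfgs D W. A \<sigma> \<tau> * \<psi> \<tau>)"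

lemma opnorm_alt: "opnorm D W A = Sup {vn D W (app D W A \<psi>) | \<psi>. vn D W \<psi> \<le> 1}"
  unfolding opnorm_def vn_def app_def by (simp add: real_sqrt_le_1_iff)

lemma vn_L2: "vn D W \<psi> = L2_set (\<lambda>\<sigma>. cmod (\<psi> \<sigma>)) (cfgs D W)"
  by (simp add: vn_def L2_set_def)

lemma vn_nonneg: "0 \<le> vn D W \<psi>" by (simp add: vn_def sum_nonneg)

lemma vn_cong: "(\<And>\<sigma>. \<sigma> \<in> cfgs D W \<Longrightarrow> \<psi> \<sigma> = \<phi> \<sigma>) \<Longrightarrow> vn D W \<psi> = vn D W \<phi>"
  by (simp add: vn_def)

lemma vn_scale: "vn D W (\<lambda>\<sigma>. c * \<psi> \<sigma>) = cmod c * vn D W \<psi>"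
proof -
  have "(\<Sum>\<sigma>\<in>cfgs D W. (cmod (c * \<psi> \<sigma>))\<^sup>2) = (cmod c)\<^sup>2 * (\<Sum>\<sigma>\<in>cfgs D W. (cmod (\<psi> \<sigma>))\<^sup>2)"
    by (simp add: norm_mult power_mult_distrib sum_distrib_left)
  then show ?thesis by (simp add: vn_def real_sqrt_mult)
qed

lemma vn_add: "vn D W (\<lambda>\<sigma>. \<psi> \<sigma> + \<phi> \<sigma>) \<le> vn D W \<psi> + vn D W \<phi>"
proof -
  have "vn D W (\<lambda>\<sigma>. \<psi> \<sigma> + \<phi> \<sigma>) \<le> L2_set (\<lambda>\<sigma>. cmod (\<psi> \<sigma>) + cmod (\<phi> \<sigma>)) (cfgs D W)"
    unfolding vn_L2 by (rule L2_set_mono) (auto simp: norm_triangle_ineq)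
  also have "\<dots> \<le> vn D W \<psi> + vn D W \<phi>" unfolding vn_L2 by (rule L2_set_triangle_ineq)
  finally show ?thesis .
qed

lemma vn_le_1_member: "finite W \<Longrightarrow> \<sigma> \<in> cfgs D W \<Longrightarrow> cmod (\<psi> \<sigma>) \<le> vn D W \<psi>"
  unfolding vn_L2 by (rule member_le_L2_set) (auto simp: finite_cfgs)

lemma vn_zero: "finite W \<Longrightarrow> vn D W \<psi> = 0 \<Longrightarrow> \<sigma> \<in> cfgs D W \<Longrightarrow> \<psi> \<sigma> = 0"
  using vn_le_1_member[of W \<sigma> D \<psi>] by auto

lemma app_bound:
  assumes W: "finite W"
  shows "vn D W (app D W A \<psi>) \<le> (\<Sum>\<sigma>\<in>cfgs D W. \<Sum>\<tau>\<in>cfgs D W. cmod (A \<sigma> \<tau>)) * vn D W \<psi>"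
proof -
  have "vn D W (app D W A \<psi>) \<le> (\<Sum>\<sigma>\<in>cfgs D W. \<bar>cmod (app D W A \<psi> \<sigma>)\<bar>)"
    unfolding vn_L2 by (rule L2_set_le_sum_abs)
  also have "\<dots> \<le> (\<Sum>\<sigma>\<in>cfgs D W. \<Sum>\<tau>\<in>cfgs D W. cmod (A \<sigma> \<tau>) * vn D W \<psi>)"
  proof (rule sum_mono)
    fix \<sigma> assume "\<sigma> \<in> cfgs D W"
    have "\<bar>cmod (app D W A \<psi> \<sigma>)\<bar> \<le> (\<Sum>\<tau>\<in>cfgs D W. cmod (A \<sigma> \<tau> * \<psi> \<tau>))"
      unfolding app_def by (simp add: norm_sum)
    also have "\<dots> \<le> (\<Sum>\<tau>\<in>cfgs D W. cmod (A \<sigma> \<tau>) * vn D W \<psi>)"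
      by (rule sum_mono) (simp add: norm_mult mult_left_mono vn_le_1_member[OF W])
    finally show "\<bar>cmod (app D W A \<psi> \<sigma>)\<bar> \<le> (\<Sum>\<tau>\<in>cfgs D W. cmod (A \<sigma> \<tau>) * vn D W \<psi>)" .
  qed
  also have "\<dots> = (\<Sum>\<sigma>\<in>cfgs D W. \<Sum>\<tau>\<in>cfgs D W. cmod (A \<sigma> \<tau>)) * vn D W \<psi>"
    by (simp add: sum_distrib_right)
  finally show ?thesis .
qed

lemma opnorm_bdd:
  assumes W: "finite W"
  shows "bdd_above {vn D W (app D W A \<psi>) | \<psi>. vn D W \<psi> \<le> 1}"
proof -
  let ?K = "(\<Sum>\<sigma>\<in>cfgs D W. \<Sum>\<tau>\<in>cfgs D W. cmod (A \<sigma> \<tau>))"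
  have K: "0 \<le> ?K" by (simp add: sum_nonneg)
  show ?thesis
  proof (rule bdd_aboveI[where M="?K"])
    fix x assume "x \<in> {vn D W (app D W A \<psi>) | \<psi>. vn D W \<psi> \<le> 1}"
    then obtain \<psi> where x: "x = vn D W (app D W A \<psi>)" and p: "vn D W \<psi> \<le> 1" by blast
    have "x \<le> ?K * vn D W \<psi>" using app_bound[OF W] x by simp
    also have "\<dots> \<le> ?K" using p K by (simp add: mult_left_le)
    finally show "x \<le> ?K" .
  qed
qed

lemma opnorm_upper: "finite W \<Longrightarrow> vn D W \<psi> \<le> 1 \<Longrightarrow> vn D W (app D W A \<psi>) \<le> opnorm D W A"
  unfolding opnorm_alt by (rule cSup_upper) (auto intro: opnorm_bdd)

lemma vn_zero_fun[simp]: "vn D W (\<lambda>_. 0) = 0" by (simp add: vn_def)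

lemma opnorm_nonneg: "finite W \<Longrightarrow> 0 \<le> opnorm D W A"
proof -
  assume W: "finite W"
  have "vn D W (app D W A (\<lambda>_. 0)) \<le> opnorm D W A" by (rule opnorm_upper[OF W]) simp
  then show ?thesis using vn_nonneg[of D W "app D W A (\<lambda>_. 0)"] by linarith
qed

lemma opnorm_least:
  assumes "0 \<le> K" "\<And>\<psi>. vn D W \<psi> \<le> 1 \<Longrightarrow> vn D W (app D W A \<psi>) \<le> K"
  shows "opnorm D W A \<le> K"
  unfolding opnorm_alt
proof (rule cSup_least)
  show "{vn D W (app D W A \<psi>) | \<psi>. vn D W \<psi> \<le> 1} \<noteq> {}"
  proof -
    have "vn D W (\<lambda>_. 0) \<le> 1" by simp
    then show ?thesis by blast
  qed
qed (use assms in auto)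

lemma app_scale: "app D W A (\<lambda>\<sigma>. c * \<psi> \<sigma>) = (\<lambda>\<sigma>. c * app D W A \<psi> \<sigma>)"
  by (simp add: app_def sum_distrib_left mult.left_commute)

lemma opnorm_app:
  assumes W: "finite W"
  shows "vn D W (app D W A \<psi>) \<le> opnorm D W A * vn D W \<psi>"
proof (cases "vn D W \<psi> = 0")
  case True
  then have "app D W A \<psi> \<sigma> = 0" if "\<sigma> \<in> cfgs D W" for \<sigma>
    using vn_zero[OF W True] by (simp add: app_def)
  then have "vn D W (app D W A \<psi>) = 0" by (simp add: vn_def)
  then show ?thesis using True by simp
next
  case False
  let ?r = "vn D W \<psi>"
  have r: "?r > 0" using False vn_nonneg[of D W \<psi>] by linarith
  let ?\<phi> = "\<lambda>\<sigma>. complex_of_real (1 / ?r) * \<psi> \<sigma>"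
  have "vn D W ?\<phi> = 1" by (subst vn_scale) (use r in \<open>simp add: norm_divide\<close>)
  then have "vn D W (app D W A ?\<phi>) \<le> opnorm D W A" by (intro opnorm_upper[OF W]) simp
  moreover have "vn D W (app D W A ?\<phi>) = vn D W (app D W A \<psi>) / ?r"
    unfolding app_scale vn_scale using r by (simp add: norm_divide)
  ultimately show ?thesis using r by (simp add: divide_le_eq mult.commute)
qed

lemma opnorm_le_app:
  assumes "0 \<le> K" "\<And>\<psi>. vn D W (app D W A \<psi>) \<le> K * vn D W \<psi>"
  shows "opnorm D W A \<le> K"
proof (rule opnorm_least[OF assms(1)])
  fix \<psi> assume "vn D W \<psi> \<le> 1"
  then have "K * vn D W \<psi> \<le> K" using assms(1) by (simp add: mult_left_le)
  then show "vn D W (app D W A \<psi>) \<le> K" using assms(2)[of \<psi>] by linarith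
qed

lemma opnorm_cong:
  assumes "\<And>\<sigma> \<tau>. \<sigma> \<in> cfgs D W \<Longrightarrow> \<tau> \<in> cfgs D W \<Longrightarrow> A \<sigma> \<tau> = B \<sigma> \<tau>"
  shows "opnorm D W A = opnorm D W B"
proof -
  have "vn D W (app D W A \<psi>) = vn D W (app D W B \<psi>)" for \<psi>
    by (rule vn_cong) (simp add: app_def assms)
  then show ?thesis unfolding opnorm_alt by simp
qed

lemma opnorm_zero:
  assumes W: "finite W" and "\<And>\<sigma> \<tau>. \<sigma> \<in> cfgs D W \<Longrightarrow> \<tau> \<in> cfgs D W \<Longrightarrow> A \<sigma> \<tau> = 0"
  shows "opnorm D W A = 0"
proof -
  have "opnorm D W A = opnorm D W (\<lambda>_ _. 0)" by (rule opnorm_cong) (use assms in auto)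
  also have "\<dots> \<le> 0" by (rule opnorm_least) (auto simp: app_def)
  finally show ?thesis using opnorm_nonneg[OF W, of D A] by linarith
qed

lemma opnorm_add:
  assumes W: "finite W"
  shows "opnorm D W (\<lambda>\<sigma> \<tau>. A \<sigma> \<tau> + B \<sigma> \<tau>) \<le> opnorm D W A + opnorm D W B"
proof (rule opnorm_le_app)
  show "0 \<le> opnorm D W A + opnorm D W B" using opnorm_nonneg[OF W] by (simp add: add_nonneg_nonneg)
  fix \<psi>
  have "app D W (\<lambda>\<sigma> \<tau>. A \<sigma> \<tau> + B \<sigma> \<tau>) \<psi> = (\<lambda>\<sigma>. app D W A \<psi> \<sigma> + app D W B \<psi> \<sigma>)"
    by (simp add: app_def distrib_right sum.distrib)
  then have "vn D W (app D W (\<lambda>\<sigma> \<tau>. A \<sigma> \<tau> + B \<sigma> \<tau>) \<psi>) \<le> vn D W (app D W A \<psi>) + vn D W (app D W B \<psi>)"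
    by (simp add: vn_add)
  also have "\<dots> \<le> opnorm D W A * vn D W \<psi> + opnorm D W B * vn D W \<psi>"
    by (intro add_mono opnorm_app[OF W])
  finally show "vn D W (app D W (\<lambda>\<sigma> \<tau>. A \<sigma> \<tau> + B \<sigma> \<tau>) \<psi>) \<le> (opnorm D W A + opnorm D W B) * vn D W \<psi>"
    by (simp add: distrib_right)
qed

lemma opnorm_scale:
  assumes W: "finite W"
  shows "opnorm D W (\<lambda>\<sigma> \<tau>. c * A \<sigma> \<tau>) \<le> cmod c * opnorm D W A"
proof (rule opnorm_le_app)
  show "0 \<le> cmod c * opnorm D W A" using opnorm_nonneg[OF W] by simp
  fix \<psi>
  have "app D W (\<lambda>\<sigma> \<tau>. c * A \<sigma> \<tau>) \<psi> = (\<lambda>\<sigma>. c * app D W A \<psi> \<sigma>)"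
    by (simp add: app_def sum_distrib_left mult.assoc)
  then show "vn D W (app D W (\<lambda>\<sigma> \<tau>. c * A \<sigma> \<tau>) \<psi>) \<le> cmod c * opnorm D W A * vn D W \<psi>"
    using opnorm_app[OF W, of D A \<psi>] by (simp add: vn_scale mult.assoc mult_left_mono)
qed

lemma opnorm_diff:
  assumes W: "finite W"
  shows "opnorm D W (\<lambda>\<sigma> \<tau>. A \<sigma> \<tau> - B \<sigma> \<tau>) \<le> opnorm D W A + opnorm D W B"
proof -
  have "opnorm D W (\<lambda>\<sigma> \<tau>. A \<sigma> \<tau> - B \<sigma> \<tau>) \<le> opnorm D W A + opnorm D W (\<lambda>\<sigma> \<tau>. (-1) * B \<sigma> \<tau>)"
    using opnorm_add[OF W, of D A "\<lambda>\<sigma> \<tau>. (-1) * B \<sigma> \<tau>"] by simp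
  also have "opnorm D W (\<lambda>\<sigma> \<tau>. (-1) * B \<sigma> \<tau>) \<le> opnorm D W B"
    using opnorm_scale[OF W, of D "-1" B] by simp
  finally show ?thesis by simp
qed

lemma app_mmul: "app D W (mmul D W A B) \<psi> = app D W A (app D W B \<psi>)"
proof
  fix \<sigma>
  have "app D W (mmul D W A B) \<psi> \<sigma> = (\<Sum>\<tau>\<in>cfgs D W. \<Sum>\<rho>\<in>cfgs D W. A \<sigma> \<rho> * (B \<rho> \<tau> * \<psi> \<tau>))"
    by (simp add: app_def mmul_def sum_distrib_right mult.assoc)
  also have "\<dots> = (\<Sum>\<rho>\<in>cfgs D W. \<Sum>\<tau>\<in>cfgs D W. A \<sigma> \<rho> * (B \<rho> \<tau> * \<psi> \<tau>))"
    by (rule sum.swap)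
  also have "\<dots> = app D W A (app D W B \<psi>) \<sigma>"
    by (simp add: app_def sum_distrib_left)
  finally show "app D W (mmul D W A B) \<psi> \<sigma> = app D W A (app D W B \<psi>) \<sigma>" .
qed

lemma opnorm_mmul:
  assumes W: "finite W"
  shows "opnorm D W (mmul D W A B) \<le> opnorm D W A * opnorm D W B"
proof (rule opnorm_le_app)
  show "0 \<le> opnorm D W A * opnorm D W B" using opnorm_nonneg[OF W] by simp
  fix \<psi>
  have "vn D W (app D W A (app D W B \<psi>)) \<le> opnorm D W A * vn D W (app D W B \<psi>)" by (rule opnorm_app[OF W])
  also have "\<dots> \<le> opnorm D W A * (opnorm D W B * vn D W \<psi>)"
    by (intro mult_left_mono opnorm_app[OF W] opnorm_nonneg[OF W])
  finally show "vn D W (app D W (mmul D W A B) \<psi>) \<le> opnorm D W A * opnorm D W B * vn D W \<psi>"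
    by (simp add: app_mmul mult.assoc)
qed

lemma opnorm_sum:
  assumes W: "finite W"
  shows "opnorm D W (\<lambda>\<sigma> \<tau>. \<Sum>i\<in>I. A i \<sigma> \<tau>) \<le> (\<Sum>i\<in>I. opnorm D W (A i))"
proof (cases "finite I")
  case True
  then show ?thesis
  proof (induction I rule: finite_induct)
    case empty
    then show ?case using opnorm_zero[OF W, of D "\<lambda>_ _. 0"] by simp
  next
    case (insert x F)
    have "opnorm D W (\<lambda>\<sigma> \<tau>. \<Sum>i\<in>insert x F. A i \<sigma> \<tau>) = opnorm D W (\<lambda>\<sigma> \<tau>. A x \<sigma> \<tau> + (\<Sum>i\<in>F. A i \<sigma> \<tau>))"
      using insert by simp
    also have "\<dots> \<le> opnorm D W (A x) + opnorm D W (\<lambda>\<sigma> \<tau>. (\<Sum>i\<in>F. A i \<sigma> \<tau>))"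
      using opnorm_add[OF W, of D "A x" "\<lambda>\<sigma> \<tau>. (\<Sum>i\<in>F. A i \<sigma> \<tau>)"] by simp
    also have "\<dots> \<le> opnorm D W (A x) + (\<Sum>i\<in>F. opnorm D W (A i))" using insert by simp
    finally show ?case using insert by simp
  qed
next
  case False
  then show ?thesis using opnorm_zero[OF W, of D "\<lambda>_ _. 0"] by simp
qed

lemma opnorm_suminf_le:
  assumes W: "finite W"
    and S: "\<And>\<sigma> \<tau>. \<sigma> \<in> cfgs D W \<Longrightarrow> \<tau> \<in> cfgs D W \<Longrightarrow> (\<lambda>n. F n \<sigma> \<tau>) sums G \<sigma> \<tau>"
    and B: "\<And>N. opnorm D W (\<lambda>\<sigma> \<tau>. \<Sum>n<N. F n \<sigma> \<tau>) \<le> B"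
  shows "opnorm D W G \<le> B"
proof (rule opnorm_least)
  show "0 \<le> B" using B[of 0] opnorm_nonneg[OF W, of D] by (meson order_trans)
  fix \<psi> assume p: "vn D W \<psi> \<le> 1"
  let ?S = "\<lambda>N. (\<lambda>\<sigma> \<tau>. \<Sum>n<N. F n \<sigma> \<tau>)"
  have le: "vn D W (app D W (?S N) \<psi>) \<le> B" for N
    using opnorm_upper[OF W p, of "?S N"] B[of N] by linarith
  have conv: "(\<lambda>N. app D W (?S N) \<psi> \<sigma>) \<longlonglongrightarrow> app D W G \<psi> \<sigma>" if "\<sigma> \<in> cfgs D W" for \<sigma>
    unfolding app_def
    by (intro tendsto_sum tendsto_mult_right) (use S[OF that] in \<open>simp add: sums_def\<close>)
  have "(\<lambda>N. vn D W (app D W (?S N) \<psi>)) \<longlonglongrightarrow> vn D W (app D W G \<psi>)"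
    unfolding vn_def by (intro tendsto_real_sqrt tendsto_sum tendsto_power tendsto_norm conv)
  then show "vn D W (app D W G \<psi>) \<le> B" by (rule LIMSEQ_le_const2) (use le in auto)
qed



definition addc :: "'v cfg \<Rightarrow> 'v cfg \<Rightarrow> 'v cfg" where
  "addc \<alpha> \<beta> = (\<lambda>v. \<alpha> v + \<beta> v)"

lemma restr_in: "\<sigma> \<in> cfgs D W \<Longrightarrow> S \<subseteq> W \<Longrightarrow> restr S \<sigma> \<in> cfgs D S"
  by (auto simp: cfgs_def restr_def)

lemma restr_diff_in: "\<sigma> \<in> cfgs D W \<Longrightarrow> restr (W - S) \<sigma> \<in> cfgs D (W - S)"
  by (auto simp: cfgs_def restr_def)

lemma split_eq: "\<sigma> \<in> cfgs D W \<Longrightarrow> S \<subseteq> W \<Longrightarrow> addc (restr S \<sigma>) (restr (W - S) \<sigma>) = \<sigma>"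
  by (auto simp: cfgs_def restr_def addc_def)

lemma addc_in: "\<alpha> \<in> cfgs D S \<Longrightarrow> \<beta> \<in> cfgs D (W - S) \<Longrightarrow> S \<subseteq> W \<Longrightarrow> addc \<alpha> \<beta> \<in> cfgs D W"
  unfolding cfgs_def addc_def by (auto, case_tac "v \<in> S", auto)

lemma restr_addc1: "\<alpha> \<in> cfgs D S \<Longrightarrow> \<beta> \<in> cfgs D (W - S) \<Longrightarrow> restr S (addc \<alpha> \<beta>) = \<alpha>"
  unfolding cfgs_def addc_def restr_def by auto

lemma restr_addc2: "\<alpha> \<in> cfgs D S \<Longrightarrow> \<beta> \<in> cfgs D (W - S) \<Longrightarrow> restr (W - S) (addc \<alpha> \<beta>) = \<beta>"
  unfolding cfgs_def addc_def restr_def by auto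

lemma cfg_split:
  assumes W: "finite W" and S: "S \<subseteq> W"
  shows "(\<Sum>\<sigma>\<in>cfgs D W. F \<sigma>) = (\<Sum>\<beta>\<in>cfgs D (W - S). \<Sum>\<alpha>\<in>cfgs D S. F (addc \<alpha> \<beta>))"
proof -
  let ?g = "\<lambda>(\<beta>, \<alpha>). addc \<alpha> \<beta>"
  have inj: "inj_on ?g (cfgs D (W - S) \<times> cfgs D S)"
  proof (rule inj_onI, clarify)
    fix \<beta> \<alpha> \<beta>' \<alpha>'
    assume a: "\<beta> \<in> cfgs D (W - S)" "\<alpha> \<in> cfgs D S" "\<beta>' \<in> cfgs D (W - S)" "\<alpha>' \<in> cfgs D S"
      and e: "addc \<alpha> \<beta> = addc \<alpha>' \<beta>'"
    have "restr S (addc \<alpha> \<beta>) = restr S (addc \<alpha>' \<beta>')" "restr (W - S) (addc \<alpha> \<beta>) = restr (W - S) (addc \<alpha>' \<beta>')"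
      using e by simp_all
    then show "\<beta> = \<beta>' \<and> \<alpha> = \<alpha>'" using a by (simp add: restr_addc1 restr_addc2)
  qed
  have img: "?g ` (cfgs D (W - S) \<times> cfgs D S) = cfgs D W"
  proof
    show "?g ` (cfgs D (W - S) \<times> cfgs D S) \<subseteq> cfgs D W" using S by (auto intro: addc_in)
    show "cfgs D W \<subseteq> ?g ` (cfgs D (W - S) \<times> cfgs D S)"
    proof
      fix \<sigma> assume s: "\<sigma> \<in> cfgs D W"
      then have "\<sigma> = ?g (restr (W - S) \<sigma>, restr S \<sigma>)" using split_eq[OF s S] by simp
      moreover have "(restr (W - S) \<sigma>, restr S \<sigma>) \<in> cfgs D (W - S) \<times> cfgs D S"
        using s S by (simp add: restr_in restr_diff_in)
      ultimately show "\<sigma> \<in> ?g ` (cfgs D (W - S) \<times> cfgs D S)" by blast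
    qed
  qed
  have "(\<Sum>\<sigma>\<in>cfgs D W. F \<sigma>) = (\<Sum>p\<in>cfgs D (W - S) \<times> cfgs D S. F (?g p))"
    using sum.reindex[OF inj, of F] img by simp
  also have "\<dots> = (\<Sum>\<beta>\<in>cfgs D (W - S). \<Sum>\<alpha>\<in>cfgs D S. F (addc \<alpha> \<beta>))"
    by (subst sum.cartesian_product) (simp add: split_def)
  finally show ?thesis .
qed

lemma cfg_collapse:
  assumes W: "finite W" and S: "S \<subseteq> W" and s: "\<sigma> \<in> cfgs D W"
  shows "(\<Sum>\<rho>\<in>cfgs D W. if (\<forall>v. v \<notin> S \<longrightarrow> \<sigma> v = \<rho> v) then F \<rho> else 0)
       = (\<Sum>\<alpha>\<in>cfgs D S. F (addc \<alpha> (restr (W - S) \<sigma>)))"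
proof -
  let ?b = "restr (W - S) \<sigma>"
  have b: "?b \<in> cfgs D (W - S)" using s by (rule restr_diff_in)
  have cond: "(\<forall>v. v \<notin> S \<longrightarrow> \<sigma> v = addc \<alpha> \<beta> v) \<longleftrightarrow> \<beta> = ?b"
    if "\<alpha> \<in> cfgs D S" "\<beta> \<in> cfgs D (W - S)" for \<alpha> \<beta>
    using that s unfolding cfgs_def addc_def restr_def by (auto simp: fun_eq_iff) metis+
  have "(\<Sum>\<rho>\<in>cfgs D W. if (\<forall>v. v \<notin> S \<longrightarrow> \<sigma> v = \<rho> v) then F \<rho> else 0)
      = (\<Sum>\<beta>\<in>cfgs D (W - S). \<Sum>\<alpha>\<in>cfgs D S. if \<beta> = ?b then F (addc \<alpha> \<beta>) else 0)"
    by (subst cfg_split[OF W S]) (intro sum.cong refl, simp add: cond)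
  also have "\<dots> = (\<Sum>\<beta>\<in>cfgs D (W - S). if \<beta> = ?b then (\<Sum>\<alpha>\<in>cfgs D S. F (addc \<alpha> \<beta>)) else 0)"
    by (intro sum.cong refl) auto
  also have "\<dots> = (\<Sum>\<alpha>\<in>cfgs D S. F (addc \<alpha> ?b))"
    using b W by (simp add: finite_cfgs)
  finally show ?thesis .
qed

lemma vn_sq: "(vn D W \<psi>)\<^sup>2 = (\<Sum>\<sigma>\<in>cfgs D W. (cmod (\<psi> \<sigma>))\<^sup>2)"
  unfolding vn_def by (simp add: sum_nonneg)

lemma app_emb:
  assumes W: "finite W" and X: "X \<subseteq> W" and s: "\<sigma> \<in> cfgs D W"
  shows "app D W (emb X A) \<psi> \<sigma> = app D X A (\<lambda>\<alpha>. \<psi> (addc \<alpha> (restr (W - X) \<sigma>))) (restr X \<sigma>)"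
proof -
  have r: "restr (W - X) \<sigma> \<in> cfgs D (W - X)" using s by (rule restr_diff_in)
  have "app D W (emb X A) \<psi> \<sigma> = (\<Sum>\<rho>\<in>cfgs D W. if (\<forall>v. v \<notin> X \<longrightarrow> \<sigma> v = \<rho> v)
            then A (restr X \<sigma>) (restr X \<rho>) * \<psi> \<rho> else 0)"
    unfolding app_def emb_def by (intro sum.cong refl) auto
  also have "\<dots> = (\<Sum>\<alpha>\<in>cfgs D X. A (restr X \<sigma>) (restr X (addc \<alpha> (restr (W - X) \<sigma>))) * \<psi> (addc \<alpha> (restr (W - X) \<sigma>)))"
    by (rule cfg_collapse[OF W X s])
  also have "\<dots> = app D X A (\<lambda>\<alpha>. \<psi> (addc \<alpha> (restr (W - X) \<sigma>))) (restr X \<sigma>)"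
    unfolding app_def by (intro sum.cong refl) (simp add: restr_addc1[OF _ r])
  finally show ?thesis .
qed

lemma emb_norm:
  fixes A :: "'v mat"
  assumes W: "finite W" and X: "X \<subseteq> W"
  shows "opnorm D W (emb X A) \<le> opnorm D X A"
proof (rule opnorm_le_app)
  have WX: "finite X" using W X finite_subset by blast
  show "0 \<le> opnorm D X A" by (rule opnorm_nonneg[OF WX])
  fix \<psi> :: "'v cfg \<Rightarrow> complex"
  let ?K = "opnorm D X A"
  let ?p = "\<lambda>\<beta> \<alpha>. \<psi> (addc \<alpha> \<beta>)"
  have "(vn D W (app D W (emb X A) \<psi>))\<^sup>2 = (\<Sum>\<beta>\<in>cfgs D (W - X). \<Sum>\<alpha>\<in>cfgs D X.
            (cmod (app D W (emb X A) \<psi> (addc \<alpha> \<beta>)))\<^sup>2)"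
    unfolding vn_sq by (rule cfg_split[OF W X])
  also have "\<dots> = (\<Sum>\<beta>\<in>cfgs D (W - X). (vn D X (app D X A (?p \<beta>)))\<^sup>2)"
    unfolding vn_sq
  proof (intro sum.cong refl)
    fix \<beta> \<alpha> assume b: "\<beta> \<in> cfgs D (W - X)" and a: "\<alpha> \<in> cfgs D X"
    have "addc \<alpha> \<beta> \<in> cfgs D W" using a b X by (rule addc_in)
    then show "(cmod (app D W (emb X A) \<psi> (addc \<alpha> \<beta>)))\<^sup>2 = (cmod (app D X A (?p \<beta>) \<alpha>))\<^sup>2"
      by (simp add: app_emb[OF W X] restr_addc1[OF a b] restr_addc2[OF a b])
  qed
  also have "\<dots> \<le> (\<Sum>\<beta>\<in>cfgs D (W - X). (?K * vn D X (?p \<beta>))\<^sup>2)"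
    by (intro sum_mono power_mono opnorm_app[OF WX] vn_nonneg)
  also have "\<dots> = ?K\<^sup>2 * (\<Sum>\<beta>\<in>cfgs D (W - X). \<Sum>\<alpha>\<in>cfgs D X. (cmod (\<psi> (addc \<alpha> \<beta>)))\<^sup>2)"
    by (simp add: power_mult_distrib sum_distrib_left vn_sq)
  also have "\<dots> = (?K * vn D W \<psi>)\<^sup>2"
    by (simp add: power_mult_distrib vn_sq cfg_split[OF W X])
  finally show "vn D W (app D W (emb X A) \<psi>) \<le> ?K * vn D W \<psi>"
    by (rule power2_le_imp_le) (simp add: opnorm_nonneg[OF WX] vn_nonneg)
qed



definition loc :: "nat \<Rightarrow> 'v set \<Rightarrow> 'v set \<Rightarrow> 'v mat \<Rightarrow> bool" where
  "loc D W S B = (\<exists>f. \<forall>\<sigma>\<in>cfgs D W. \<forall>\<tau>\<in>cfgs D W. B \<sigma> \<tau> = emb S f \<sigma> \<tau>)"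

definition adm :: "nat \<Rightarrow> 'v set \<Rightarrow> 'v mat \<Rightarrow> 'v mat \<Rightarrow> 'v mat" where
  "adm D W A B = (\<lambda>\<sigma> \<tau>. mmul D W A B \<sigma> \<tau> - mmul D W B A \<sigma> \<tau>)"

lemma emb_mono: "S \<subseteq> S' \<Longrightarrow> emb S' (emb S f) = emb S f"
proof -
  assume SS: "S \<subseteq> S'"
  have r: "restr S (restr S' \<sigma>) = restr S \<sigma>" for \<sigma> :: "'a cfg" using SS by (auto simp: restr_def fun_eq_iff)
  have c: "((\<forall>v. v \<notin> S' \<longrightarrow> \<sigma> v = \<tau> v) \<and> (\<forall>v. v \<notin> S \<longrightarrow> restr S' \<sigma> v = restr S' \<tau> v))
        \<longleftrightarrow> (\<forall>v. v \<notin> S \<longrightarrow> \<sigma> v = \<tau> v)" for \<sigma> \<tau> :: "'a cfg"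
    using SS by (auto simp: restr_def)
  show ?thesis
  proof (intro ext)
    fix \<sigma> \<tau> :: "'a cfg"
    show "emb S' (emb S f) \<sigma> \<tau> = emb S f \<sigma> \<tau>"
      unfolding emb_def r using c[of \<sigma> \<tau>] by auto
  qed
qed

lemma loc_emb: "loc D W S (emb S f)" unfolding loc_def by blast

lemma loc_mono: "S \<subseteq> S' \<Longrightarrow> loc D W S B \<Longrightarrow> loc D W S' B"
  unfolding loc_def by (metis emb_mono)

lemma loc_cong: "loc D W S A \<Longrightarrow> (\<And>\<sigma> \<tau>. \<sigma> \<in> cfgs D W \<Longrightarrow> \<tau> \<in> cfgs D W \<Longrightarrow> A \<sigma> \<tau> = B \<sigma> \<tau>) \<Longrightarrow> loc D W S B"
  unfolding loc_def by metis

lemma loc_diff: "loc D W S A \<Longrightarrow> loc D W S B \<Longrightarrow> loc D W S (\<lambda>\<sigma> \<tau>. A \<sigma> \<tau> - B \<sigma> \<tau>)"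
proof -
  assume "loc D W S A" "loc D W S B"
  then obtain f g where f: "\<forall>\<sigma>\<in>cfgs D W. \<forall>\<tau>\<in>cfgs D W. A \<sigma> \<tau> = emb S f \<sigma> \<tau>"
    and g: "\<forall>\<sigma>\<in>cfgs D W. \<forall>\<tau>\<in>cfgs D W. B \<sigma> \<tau> = emb S g \<sigma> \<tau>" unfolding loc_def by blast
  have "\<forall>\<sigma>\<in>cfgs D W. \<forall>\<tau>\<in>cfgs D W. A \<sigma> \<tau> - B \<sigma> \<tau> = emb S (\<lambda>x y. f x y - g x y) \<sigma> \<tau>"
  proof (intro ballI)
    fix \<sigma> \<tau> assume "\<sigma> \<in> cfgs D W" "\<tau> \<in> cfgs D W"
    then show "A \<sigma> \<tau> - B \<sigma> \<tau> = emb S (\<lambda>x y. f x y - g x y) \<sigma> \<tau>"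
      using f g unfolding emb_def by auto
  qed
  then show ?thesis unfolding loc_def by blast
qed

lemma mmul_cong:
  assumes "\<sigma> \<in> cfgs D W" "\<tau> \<in> cfgs D W"
    and "\<And>\<sigma> \<tau>. \<sigma> \<in> cfgs D W \<Longrightarrow> \<tau> \<in> cfgs D W \<Longrightarrow> A \<sigma> \<tau> = A' \<sigma> \<tau>"
    and "\<And>\<sigma> \<tau>. \<sigma> \<in> cfgs D W \<Longrightarrow> \<tau> \<in> cfgs D W \<Longrightarrow> B \<sigma> \<tau> = B' \<sigma> \<tau>"
  shows "mmul D W A B \<sigma> \<tau> = mmul D W A' B' \<sigma> \<tau>"
  unfolding mmul_def using assms by (intro sum.cong refl) simp

lemma agr_addc:
  assumes "\<alpha> \<in> cfgs D S" "\<sigma> \<in> cfgs D W" "S \<subseteq> W"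
  shows "(\<forall>v. v \<notin> S \<longrightarrow> addc \<alpha> (restr (W - S) \<sigma>) v = \<tau> v) \<longleftrightarrow> (\<forall>v. v \<notin> S \<longrightarrow> \<sigma> v = \<tau> v)"
proof -
  have "v \<notin> S \<Longrightarrow> addc \<alpha> (restr (W - S) \<sigma>) v = \<sigma> v" for v
    using assms by (auto simp: cfgs_def addc_def restr_def)
  then show ?thesis by auto
qed

lemma mmul_emb_same:
  assumes W: "finite W" and S: "S \<subseteq> W" and s: "\<sigma> \<in> cfgs D W"
  shows "mmul D W (emb S f) (emb S g) \<sigma> \<tau> = emb S (\<lambda>x y. \<Sum>\<alpha>\<in>cfgs D S. f x \<alpha> * g \<alpha> y) \<sigma> \<tau>"
proof -
  have r: "restr (W - S) \<sigma> \<in> cfgs D (W - S)" using s by (rule restr_diff_in)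
  have "mmul D W (emb S f) (emb S g) \<sigma> \<tau> = (\<Sum>\<rho>\<in>cfgs D W. if (\<forall>v. v \<notin> S \<longrightarrow> \<sigma> v = \<rho> v)
           then f (restr S \<sigma>) (restr S \<rho>) * emb S g \<rho> \<tau> else 0)"
    unfolding mmul_def by (intro sum.cong refl) (auto simp: emb_def[of S f])
  also have "\<dots> = (\<Sum>\<alpha>\<in>cfgs D S. f (restr S \<sigma>) (restr S (addc \<alpha> (restr (W - S) \<sigma>)))
                      * emb S g (addc \<alpha> (restr (W - S) \<sigma>)) \<tau>)"
    by (rule cfg_collapse[OF W S s])
  also have "\<dots> = (\<Sum>\<alpha>\<in>cfgs D S. if (\<forall>v. v \<notin> S \<longrightarrow> \<sigma> v = \<tau> v) then f (restr S \<sigma>) \<alpha> * g \<alpha> (restr S \<tau>) else 0)"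
  proof (intro sum.cong refl)
    fix \<alpha> assume a: "\<alpha> \<in> cfgs D S"
    show "f (restr S \<sigma>) (restr S (addc \<alpha> (restr (W - S) \<sigma>))) * emb S g (addc \<alpha> (restr (W - S) \<sigma>)) \<tau>
        = (if (\<forall>v. v \<notin> S \<longrightarrow> \<sigma> v = \<tau> v) then f (restr S \<sigma>) \<alpha> * g \<alpha> (restr S \<tau>) else 0)"
      unfolding emb_def[of S g] using agr_addc[OF a s S, of \<tau>] by (auto simp: restr_addc1[OF a r])
  qed
  also have "\<dots> = emb S (\<lambda>x y. \<Sum>\<alpha>\<in>cfgs D S. f x \<alpha> * g \<alpha> y) \<sigma> \<tau>"
  proof (cases "\<forall>v. v \<notin> S \<longrightarrow> \<sigma> v = \<tau> v")
    case True then show ?thesis by (simp add: emb_def)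
  next
    case False then show ?thesis by (simp only: emb_def if_not_P[OF False] if_False sum.neutral_const)
  qed
  finally show ?thesis .
qed

lemma loc_mmul_same:
  assumes W: "finite W" and S: "S \<subseteq> W" and A: "loc D W S A" and B: "loc D W S B"
  shows "loc D W S (mmul D W A B)"
proof -
  obtain f g where f: "\<forall>\<sigma>\<in>cfgs D W. \<forall>\<tau>\<in>cfgs D W. A \<sigma> \<tau> = emb S f \<sigma> \<tau>"
    and g: "\<forall>\<sigma>\<in>cfgs D W. \<forall>\<tau>\<in>cfgs D W. B \<sigma> \<tau> = emb S g \<sigma> \<tau>" using A B unfolding loc_def by blast
  have "mmul D W A B \<sigma> \<tau> = emb S (\<lambda>x y. \<Sum>\<alpha>\<in>cfgs D S. f x \<alpha> * g \<alpha> y) \<sigma> \<tau>"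
    if "\<sigma> \<in> cfgs D W" "\<tau> \<in> cfgs D W" for \<sigma> \<tau>
  proof -
    have "mmul D W A B \<sigma> \<tau> = mmul D W (emb S f) (emb S g) \<sigma> \<tau>"
      by (rule mmul_cong) (use that f g in auto)
    also have "\<dots> = emb S (\<lambda>x y. \<Sum>\<alpha>\<in>cfgs D S. f x \<alpha> * g \<alpha> y) \<sigma> \<tau>"
      by (rule mmul_emb_same[OF W S that(1)])
    finally show ?thesis .
  qed
  then show ?thesis unfolding loc_def by blast
qed

lemma loc_mmul:
  assumes W: "finite W" and S: "S \<subseteq> W" and T: "T \<subseteq> W" and A: "loc D W S A" and B: "loc D W T B"
  shows "loc D W (S \<union> T) (mmul D W A B)"
  by (rule loc_mmul_same[OF W]) (use S T loc_mono[OF _ A] loc_mono[OF _ B] in auto)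

lemma mmul_emb_disj:
  assumes W: "finite W" and S: "S \<subseteq> W" and T: "T \<subseteq> W" and ST: "S \<inter> T = {}"
    and s: "\<sigma> \<in> cfgs D W" and t: "\<tau> \<in> cfgs D W"
  shows "mmul D W (emb S f) (emb T g) \<sigma> \<tau> = (if (\<forall>v. v \<notin> S \<union> T \<longrightarrow> \<sigma> v = \<tau> v)
           then f (restr S \<sigma>) (restr S \<tau>) * g (restr T \<sigma>) (restr T \<tau>) else 0)"
proof -
  let ?r = "restr (W - S) \<sigma>"
  have r: "?r \<in> cfgs D (W - S)" using s by (rule restr_diff_in)
  have tS: "restr S \<tau> \<in> cfgs D S" using t S by (rule restr_in)
  have key: "(\<forall>v. v \<notin> T \<longrightarrow> addc \<alpha> ?r v = \<tau> v) \<longleftrightarrow> (\<alpha> = restr S \<tau> \<and> (\<forall>v. v \<notin> S \<union> T \<longrightarrow> \<sigma> v = \<tau> v))"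
    if a: "\<alpha> \<in> cfgs D S" for \<alpha>
  proof
    assume h: "\<forall>v. v \<notin> T \<longrightarrow> addc \<alpha> ?r v = \<tau> v"
    have "\<alpha> = restr S \<tau>"
    proof
      fix v show "\<alpha> v = restr S \<tau> v"
      proof (cases "v \<in> S")
        case True
        then have "v \<notin> T" using ST by blast
        then show ?thesis using h True by (auto simp: addc_def restr_def)
      next
        case False then show ?thesis using a by (auto simp: cfgs_def restr_def)
      qed
    qed
    moreover have "\<forall>v. v \<notin> S \<union> T \<longrightarrow> \<sigma> v = \<tau> v"
    proof (intro allI impI)
      fix v assume v: "v \<notin> S \<union> T"
      then have "addc \<alpha> ?r v = \<tau> v" using h by blast
      moreover have "\<alpha> v = 0" using a v by (auto simp: cfgs_def)
      ultimately show "\<sigma> v = \<tau> v" using s v by (auto simp: addc_def restr_def cfgs_def split: if_splits)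
    qed
    ultimately show "\<alpha> = restr S \<tau> \<and> (\<forall>v. v \<notin> S \<union> T \<longrightarrow> \<sigma> v = \<tau> v)" by blast
  next
    assume h: "\<alpha> = restr S \<tau> \<and> (\<forall>v. v \<notin> S \<union> T \<longrightarrow> \<sigma> v = \<tau> v)"
    show "\<forall>v. v \<notin> T \<longrightarrow> addc \<alpha> ?r v = \<tau> v"
    proof (intro allI impI)
      fix v assume v: "v \<notin> T"
      show "addc \<alpha> ?r v = \<tau> v"
      proof (cases "v \<in> S")
        case True then show ?thesis using h by (auto simp: addc_def restr_def)
      next
        case False then show ?thesis using h v s t by (auto simp: addc_def restr_def cfgs_def)
      qed
    qed
  qed
  have rT: "restr T (addc \<alpha> ?r) = restr T \<sigma>" if a: "\<alpha> \<in> cfgs D S" for \<alpha>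
  proof
    fix v show "restr T (addc \<alpha> ?r) v = restr T \<sigma> v"
      using a ST T by (auto simp: restr_def addc_def cfgs_def)
  qed
  have "mmul D W (emb S f) (emb T g) \<sigma> \<tau> = (\<Sum>\<rho>\<in>cfgs D W. if (\<forall>v. v \<notin> S \<longrightarrow> \<sigma> v = \<rho> v)
           then f (restr S \<sigma>) (restr S \<rho>) * emb T g \<rho> \<tau> else 0)"
    unfolding mmul_def by (intro sum.cong refl) (auto simp: emb_def[of S f])
  also have "\<dots> = (\<Sum>\<alpha>\<in>cfgs D S. f (restr S \<sigma>) (restr S (addc \<alpha> ?r)) * emb T g (addc \<alpha> ?r) \<tau>)"
    by (rule cfg_collapse[OF W S s])
  also have "\<dots> = (\<Sum>\<alpha>\<in>cfgs D S. if \<alpha> = restr S \<tau> then (if (\<forall>v. v \<notin> S \<union> T \<longrightarrow> \<sigma> v = \<tau> v)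
           then f (restr S \<sigma>) (restr S \<tau>) * g (restr T \<sigma>) (restr T \<tau>) else 0) else 0)"
  proof (intro sum.cong refl)
    fix \<alpha> assume a: "\<alpha> \<in> cfgs D S"
    show "f (restr S \<sigma>) (restr S (addc \<alpha> ?r)) * emb T g (addc \<alpha> ?r) \<tau> = (if \<alpha> = restr S \<tau> then (if (\<forall>v. v \<notin> S \<union> T \<longrightarrow> \<sigma> v = \<tau> v)
           then f (restr S \<sigma>) (restr S \<tau>) * g (restr T \<sigma>) (restr T \<tau>) else 0) else 0)"
      unfolding emb_def[of T g] using key[OF a] rT[OF a] by (auto simp: restr_addc1[OF a r])
  qed
  also have "\<dots> = (if (\<forall>v. v \<notin> S \<union> T \<longrightarrow> \<sigma> v = \<tau> v)
           then f (restr S \<sigma>) (restr S \<tau>) * g (restr T \<sigma>) (restr T \<tau>) else 0)"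
    using tS W S by (simp add: finite_cfgs finite_subset)
  finally show ?thesis .
qed

lemma loc_comm:
  assumes W: "finite W" and S: "S \<subseteq> W" and T: "T \<subseteq> W" and ST: "S \<inter> T = {}"
    and A: "loc D W S A" and B: "loc D W T B" and s: "\<sigma> \<in> cfgs D W" and t: "\<tau> \<in> cfgs D W"
  shows "mmul D W A B \<sigma> \<tau> = mmul D W B A \<sigma> \<tau>"
proof -
  obtain f g where f: "\<forall>\<sigma>\<in>cfgs D W. \<forall>\<tau>\<in>cfgs D W. A \<sigma> \<tau> = emb S f \<sigma> \<tau>"
    and g: "\<forall>\<sigma>\<in>cfgs D W. \<forall>\<tau>\<in>cfgs D W. B \<sigma> \<tau> = emb T g \<sigma> \<tau>" using A B unfolding loc_def by blast
  have "mmul D W A B \<sigma> \<tau> = mmul D W (emb S f) (emb T g) \<sigma> \<tau>"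
    by (rule mmul_cong[OF s t]) (use f g in auto)
  also have "\<dots> = mmul D W (emb T g) (emb S f) \<sigma> \<tau>"
  proof -
    have TS: "T \<inter> S = {}" using ST by blast
    show ?thesis unfolding mmul_emb_disj[OF W S T ST s t] mmul_emb_disj[OF W T S TS s t]
      by (simp only: Un_commute[of T S] mult.commute[of "g _ _"])
  qed
  also have "\<dots> = mmul D W B A \<sigma> \<tau>"
    by (rule mmul_cong[OF s t]) (use f g in auto)
  finally show ?thesis .
qed

lemma loc_adm:
  assumes W: "finite W" and S: "S \<subseteq> W" and T: "T \<subseteq> W" and A: "loc D W S A" and B: "loc D W T B"
  shows "loc D W (S \<union> T) (adm D W A B)"
  unfolding adm_def
  by (rule loc_diff) (use loc_mmul[OF W S T A B] loc_mmul[OF W T S B A] in \<open>auto simp: Un_commute\<close>)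

lemma loc_adm_disj:
  assumes W: "finite W" and S: "S \<subseteq> W" and T: "T \<subseteq> W" and ST: "S \<inter> T = {}"
    and A: "loc D W S A" and B: "loc D W T B" and s: "\<sigma> \<in> cfgs D W" and t: "\<tau> \<in> cfgs D W"
  shows "adm D W A B \<sigma> \<tau> = 0"
  unfolding adm_def using loc_comm[OF W S T ST A B s t] by simp

lemma opnorm_adm:
  assumes W: "finite W"
  shows "opnorm D W (adm D W A B) \<le> 2 * opnorm D W A * opnorm D W B"
proof -
  have "opnorm D W (adm D W A B) \<le> opnorm D W (mmul D W A B) + opnorm D W (mmul D W B A)"
    unfolding adm_def by (rule opnorm_diff[OF W])
  also have "\<dots> \<le> opnorm D W A * opnorm D W B + opnorm D W B * opnorm D W A"
    by (intro add_mono opnorm_mmul[OF W])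
  finally show ?thesis by simp
qed



fun chain :: "nat \<Rightarrow> 'v set \<Rightarrow> ('v set \<Rightarrow> 'v mat) \<Rightarrow> 'v mat \<Rightarrow> 'v set list \<Rightarrow> 'v mat" where
  "chain D W \<Phi> B [] = B"
| "chain D W \<Phi> B (X # xs) = chain D W \<Phi> (adm D W (emb X (\<Phi> X)) B) xs"

fun conn :: "'v set \<Rightarrow> 'v set list \<Rightarrow> bool" where
  "conn S [] = True"
| "conn S (X # xs) = (X \<inter> S \<noteq> {} \<and> conn (S \<union> X) xs)"

fun adpow :: "nat \<Rightarrow> 'v set \<Rightarrow> 'v mat \<Rightarrow> nat \<Rightarrow> 'v mat \<Rightarrow> 'v mat" where
  "adpow D W H 0 B = B"
| "adpow D W H (Suc n) B = adpow D W H n (adm D W H B)"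

lemma adm_cong:
  assumes "\<sigma> \<in> cfgs D W" "\<tau> \<in> cfgs D W"
    and "\<And>\<sigma> \<tau>. \<sigma> \<in> cfgs D W \<Longrightarrow> \<tau> \<in> cfgs D W \<Longrightarrow> B \<sigma> \<tau> = B' \<sigma> \<tau>"
  shows "adm D W A B \<sigma> \<tau> = adm D W A B' \<sigma> \<tau>"
  unfolding adm_def using mmul_cong[OF assms(1,2), of A A B B'] mmul_cong[OF assms(1,2), of B B' A A] assms(3)
  by simp

lemma chain_cong:
  assumes "\<And>\<sigma> \<tau>. \<sigma> \<in> cfgs D W \<Longrightarrow> \<tau> \<in> cfgs D W \<Longrightarrow> B \<sigma> \<tau> = B' \<sigma> \<tau>"
    and "\<sigma> \<in> cfgs D W" "\<tau> \<in> cfgs D W"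
  shows "chain D W \<Phi> B xs \<sigma> \<tau> = chain D W \<Phi> B' xs \<sigma> \<tau>"
  using assms
proof (induction xs arbitrary: B B')
  case Nil then show ?case by simp
next
  case (Cons X xs)
  show ?case unfolding chain.simps
  proof (rule Cons.IH)
    fix \<sigma>' \<tau>' assume a: "\<sigma>' \<in> cfgs D W" "\<tau>' \<in> cfgs D W"
    show "adm D W (emb X (\<Phi> X)) B \<sigma>' \<tau>' = adm D W (emb X (\<Phi> X)) B' \<sigma>' \<tau>'"
      by (rule adm_cong[OF a]) (rule Cons.prems(1))
  qed (use Cons.prems in auto)
qed

lemma adm_zero[simp]: "adm D W A (\<lambda>_ _. 0) = (\<lambda>_ _. 0)"
  by (simp add: adm_def mmul_def)

lemma chain_zero: "chain D W \<Phi> (\<lambda>_ _. 0) xs = (\<lambda>_ _. 0)"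
  by (induction xs) simp_all

lemma chain_vanish:
  assumes W: "finite W"
  shows "S \<subseteq> W \<Longrightarrow> loc D W S B \<Longrightarrow> set xs \<subseteq> Pow W \<Longrightarrow> \<not> conn S xs
     \<Longrightarrow> \<sigma> \<in> cfgs D W \<Longrightarrow> \<tau> \<in> cfgs D W \<Longrightarrow> chain D W \<Phi> B xs \<sigma> \<tau> = 0"
proof (induction xs arbitrary: S B)
  case Nil then show ?case by simp
next
  case (Cons X xs)
  have X: "X \<subseteq> W" using Cons.prems by auto
  show ?case
  proof (cases "X \<inter> S = {}")
    case True
    have z: "adm D W (emb X (\<Phi> X)) B \<sigma>' \<tau>' = 0" if "\<sigma>' \<in> cfgs D W" "\<tau>' \<in> cfgs D W" for \<sigma>' \<tau>'
      by (rule loc_adm_disj[OF W X Cons.prems(1) True loc_emb Cons.prems(2) that])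
    have "chain D W \<Phi> B (X # xs) \<sigma> \<tau> = chain D W \<Phi> (\<lambda>_ _. 0) xs \<sigma> \<tau>"
      unfolding chain.simps by (rule chain_cong) (use z Cons.prems in auto)
    then show ?thesis by (simp add: chain_zero)
  next
    case False
    then have nc: "\<not> conn (S \<union> X) xs" using Cons.prems(4) by simp
    have l: "loc D W (S \<union> X) (adm D W (emb X (\<Phi> X)) B)"
      using loc_adm[OF W X Cons.prems(1) loc_emb Cons.prems(2)] by (simp add: Un_commute)
    show ?thesis unfolding chain.simps
      by (rule Cons.IH[OF _ l _ nc Cons.prems(5,6)]) (use Cons.prems X in auto)
  qed
qed

lemma chain_norm:
  assumes W: "finite W"
  shows "set xs \<subseteq> Pow W \<Longrightarrow> opnorm D W (chain D W \<Phi> B xs)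
     \<le> 2 ^ length xs * opnorm D W B * prod_list (map (\<lambda>X. opnorm D X (\<Phi> X)) xs)"
proof (induction xs arbitrary: B)
  case Nil then show ?case by simp
next
  case (Cons X xs)
  have X: "X \<subseteq> W" using Cons.prems by auto
  have fX: "finite X" using W X finite_subset by blast
  have P: "0 \<le> prod_list (map (\<lambda>X. opnorm D X (\<Phi> X)) xs)"
  proof (rule prod_list_nonneg)
    fix x assume "x \<in> set (map (\<lambda>X. opnorm D X (\<Phi> X)) xs)"
    then obtain Y where Y: "Y \<in> set xs" "x = opnorm D Y (\<Phi> Y)" by auto
    then have "finite Y" using Cons.prems W by (auto intro: finite_subset)
    then show "0 \<le> x" using Y by (simp add: opnorm_nonneg)
  qed
  have "opnorm D W (chain D W \<Phi> B (X # xs)) \<le> 2 ^ length xs * opnorm D W (adm D W (emb X (\<Phi> X)) B)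
       * prod_list (map (\<lambda>X. opnorm D X (\<Phi> X)) xs)"
    unfolding chain.simps by (rule Cons.IH) (use Cons.prems in auto)
  also have "\<dots> \<le> 2 ^ length xs * (2 * opnorm D X (\<Phi> X) * opnorm D W B)
       * prod_list (map (\<lambda>X. opnorm D X (\<Phi> X)) xs)"
  proof (intro mult_right_mono mult_left_mono P)
    have "opnorm D W (adm D W (emb X (\<Phi> X)) B) \<le> 2 * opnorm D W (emb X (\<Phi> X)) * opnorm D W B"
      by (rule opnorm_adm[OF W])
    also have "\<dots> \<le> 2 * opnorm D X (\<Phi> X) * opnorm D W B"
      by (intro mult_right_mono mult_left_mono emb_norm[OF W X] opnorm_nonneg[OF W]) simp
    finally show "opnorm D W (adm D W (emb X (\<Phi> X)) B) \<le> 2 * opnorm D X (\<Phi> X) * opnorm D W B" .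
  qed simp
  also have "\<dots> = 2 ^ length (X # xs) * opnorm D W B * prod_list (map (\<lambda>X. opnorm D X (\<Phi> X)) (X # xs))"
    by simp
  finally show ?case .
qed

lemma adm_sum_left:
  "adm D W (\<lambda>\<sigma> \<tau>. \<Sum>i\<in>I. A i \<sigma> \<tau>) B = (\<lambda>\<sigma> \<tau>. \<Sum>i\<in>I. adm D W (A i) B \<sigma> \<tau>)"
proof (intro ext)
  fix \<sigma> \<tau>
  have 1: "mmul D W (\<lambda>\<sigma> \<tau>. \<Sum>i\<in>I. A i \<sigma> \<tau>) B \<sigma> \<tau> = (\<Sum>i\<in>I. mmul D W (A i) B \<sigma> \<tau>)"
    unfolding mmul_def by (simp add: sum_distrib_right sum.swap[of _ I])
  have 2: "mmul D W B (\<lambda>\<sigma> \<tau>. \<Sum>i\<in>I. A i \<sigma> \<tau>) \<sigma> \<tau> = (\<Sum>i\<in>I. mmul D W B (A i) \<sigma> \<tau>)"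
    unfolding mmul_def by (simp add: sum_distrib_left sum.swap[of _ I])
  show "adm D W (\<lambda>\<sigma> \<tau>. \<Sum>i\<in>I. A i \<sigma> \<tau>) B \<sigma> \<tau> = (\<Sum>i\<in>I. adm D W (A i) B \<sigma> \<tau>)"
    unfolding adm_def 1 2 by (simp add: sum_subtractf)
qed

lemma adm_sum_right:
  "adm D W A (\<lambda>\<sigma> \<tau>. \<Sum>i\<in>I. B i \<sigma> \<tau>) = (\<lambda>\<sigma> \<tau>. \<Sum>i\<in>I. adm D W A (B i) \<sigma> \<tau>)"
proof (intro ext)
  fix \<sigma> \<tau>
  have 1: "mmul D W (\<lambda>\<sigma> \<tau>. \<Sum>i\<in>I. B i \<sigma> \<tau>) A \<sigma> \<tau> = (\<Sum>i\<in>I. mmul D W (B i) A \<sigma> \<tau>)"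
    unfolding mmul_def by (simp add: sum_distrib_right sum.swap[of _ I])
  have 2: "mmul D W A (\<lambda>\<sigma> \<tau>. \<Sum>i\<in>I. B i \<sigma> \<tau>) \<sigma> \<tau> = (\<Sum>i\<in>I. mmul D W A (B i) \<sigma> \<tau>)"
    unfolding mmul_def by (simp add: sum_distrib_left sum.swap[of _ I])
  show "adm D W A (\<lambda>\<sigma> \<tau>. \<Sum>i\<in>I. B i \<sigma> \<tau>) \<sigma> \<tau> = (\<Sum>i\<in>I. adm D W A (B i) \<sigma> \<tau>)"
    unfolding adm_def 1 2 by (simp add: sum_subtractf)
qed

lemma adpow_sum:
  "adpow D W H n (\<lambda>\<sigma> \<tau>. \<Sum>i\<in>I. B i \<sigma> \<tau>) = (\<lambda>\<sigma> \<tau>. \<Sum>i\<in>I. adpow D W H n (B i) \<sigma> \<tau>)"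
proof (induction n arbitrary: B)
  case 0 then show ?case by simp
next
  case (Suc n)
  show ?case by (simp add: adm_sum_right Suc.IH)
qed

lemma sum_lists_Suc:
  assumes "finite A"
  shows "(\<Sum>xs\<in>{xs. set xs \<subseteq> A \<and> length xs = Suc n}. f xs)
       = (\<Sum>X\<in>A. \<Sum>xs\<in>{xs. set xs \<subseteq> A \<and> length xs = n}. f (X # xs))"
proof -
  let ?L = "{xs. set xs \<subseteq> A \<and> length xs = n}"
  have inj: "inj_on (\<lambda>(xs, X). X # xs) (?L \<times> A)" by (auto simp: inj_on_def)
  have fin: "finite ?L" using assms by (rule finite_lists_length_eq)
  have "(\<Sum>xs\<in>{xs. set xs \<subseteq> A \<and> length xs = Suc n}. f xs) = (\<Sum>p\<in>?L \<times> A. f (case p of (xs, X) \<Rightarrow> X # xs))"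
    unfolding lists_length_Suc_eq by (subst sum.reindex[OF inj]) (simp add: comp_def)
  also have "\<dots> = (\<Sum>xs\<in>?L. \<Sum>X\<in>A. f (X # xs))"
    by (subst sum.cartesian_product) (simp add: split_def)
  also have "\<dots> = (\<Sum>X\<in>A. \<Sum>xs\<in>?L. f (X # xs))" by (rule sum.swap)
  finally show ?thesis .
qed

lemma adpow_chain:
  assumes Y: "finite Y"
  shows "adpow D W (ham \<Phi> Y) n B = (\<lambda>\<sigma> \<tau>. \<Sum>xs\<in>{xs. set xs \<subseteq> Pow Y \<and> length xs = n}. chain D W \<Phi> B xs \<sigma> \<tau>)"
proof (induction n arbitrary: B)
  case 0
  have "{xs. set xs \<subseteq> Pow Y \<and> length xs = 0} = {[]}" by auto
  then show ?case by simp
next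
  case (Suc n)
  have "adpow D W (ham \<Phi> Y) (Suc n) B = adpow D W (ham \<Phi> Y) n (\<lambda>\<sigma> \<tau>. \<Sum>X\<in>Pow Y. adm D W (emb X (\<Phi> X)) B \<sigma> \<tau>)"
    by (simp add: ham_def adm_sum_left)
  also have "\<dots> = (\<lambda>\<sigma> \<tau>. \<Sum>X\<in>Pow Y. \<Sum>xs\<in>{xs. set xs \<subseteq> Pow Y \<and> length xs = n}. chain D W \<Phi> B (X # xs) \<sigma> \<tau>)"
    by (simp add: adpow_sum Suc.IH)
  also have "\<dots> = (\<lambda>\<sigma> \<tau>. \<Sum>xs\<in>{xs. set xs \<subseteq> Pow Y \<and> length xs = Suc n}. chain D W \<Phi> B xs \<sigma> \<tau>)"
    using Y by (simp add: sum_lists_Suc)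
  finally show ?case .
qed



lemma mmul_assoc: "mmul D W A (mmul D W B C) = mmul D W (mmul D W A B) C"
proof (intro ext)
  fix \<sigma> \<tau>
  have "mmul D W A (mmul D W B C) \<sigma> \<tau> = (\<Sum>\<rho>\<in>cfgs D W. \<Sum>\<rho>'\<in>cfgs D W. A \<sigma> \<rho> * B \<rho> \<rho>' * C \<rho>' \<tau>)"
    by (simp add: mmul_def sum_distrib_left mult.assoc)
  also have "\<dots> = (\<Sum>\<rho>'\<in>cfgs D W. \<Sum>\<rho>\<in>cfgs D W. A \<sigma> \<rho> * B \<rho> \<rho>' * C \<rho>' \<tau>)" by (rule sum.swap)
  also have "\<dots> = mmul D W (mmul D W A B) C \<sigma> \<tau>"
    by (simp add: mmul_def sum_distrib_right)
  finally show "mmul D W A (mmul D W B C) \<sigma> \<tau> = mmul D W (mmul D W A B) C \<sigma> \<tau>" .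
qed

lemma mmul_diff_right: "mmul D W A (\<lambda>\<sigma> \<tau>. B \<sigma> \<tau> - B' \<sigma> \<tau>) = (\<lambda>\<sigma> \<tau>. mmul D W A B \<sigma> \<tau> - mmul D W A B' \<sigma> \<tau>)"
  by (simp add: mmul_def right_diff_distrib sum_subtractf)

lemma mmul_diff_left: "mmul D W (\<lambda>\<sigma> \<tau>. B \<sigma> \<tau> - B' \<sigma> \<tau>) A = (\<lambda>\<sigma> \<tau>. mmul D W B A \<sigma> \<tau> - mmul D W B' A \<sigma> \<tau>)"
  by (simp add: mmul_def left_diff_distrib sum_subtractf)

lemma funpow_lin_diff:
  fixes f :: "'v mat \<Rightarrow> 'v mat"
  assumes "\<And>B B'. f (\<lambda>\<sigma> \<tau>. B \<sigma> \<tau> - B' \<sigma> \<tau>) = (\<lambda>\<sigma> \<tau>. f B \<sigma> \<tau> - f B' \<sigma> \<tau>)"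
  shows "(f ^^ k) (\<lambda>\<sigma> \<tau>. B \<sigma> \<tau> - B' \<sigma> \<tau>) = (\<lambda>\<sigma> \<tau>. (f ^^ k) B \<sigma> \<tau> - (f ^^ k) B' \<sigma> \<tau>)"
proof (induction k)
  case 0 show ?case by simp
next
  case (Suc k)
  have "(f ^^ Suc k) (\<lambda>\<sigma> \<tau>. B \<sigma> \<tau> - B' \<sigma> \<tau>) = f ((f ^^ k) (\<lambda>\<sigma> \<tau>. B \<sigma> \<tau> - B' \<sigma> \<tau>))" by simp
  also have "\<dots> = f (\<lambda>\<sigma> \<tau>. (f ^^ k) B \<sigma> \<tau> - (f ^^ k) B' \<sigma> \<tau>)" by (simp only: Suc.IH)
  also have "\<dots> = (\<lambda>\<sigma> \<tau>. f ((f ^^ k) B) \<sigma> \<tau> - f ((f ^^ k) B') \<sigma> \<tau>)" by (rule assms)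
  finally show ?case by simp
qed

lemma R_L_comm:
  "((\<lambda>B. mmul D W B H) ^^ m) (mmul D W H B) = mmul D W H (((\<lambda>B. mmul D W B H) ^^ m) B)"
  by (induction m) (simp_all add: mmul_assoc)

lemma pascal_aux:
  fixes a :: "nat \<Rightarrow> nat \<Rightarrow> complex"
  shows "(\<Sum>k\<le>n. of_nat (n choose k) * (-1) ^ (n - k) * (a (Suc k) (n - k) - a k (Suc (n - k))))
       = (\<Sum>k\<le>Suc n. of_nat (Suc n choose k) * (-1) ^ (Suc n - k) * a k (Suc n - k))"
proof -
  define g where "g k = of_nat (n choose k) * (-1) ^ (Suc n - k) * a k (Suc n - k)" for k
  define h where "h k = of_nat (n choose k) * (-1) ^ (n - k) * a (Suc k) (n - k)" for k
  have g1: "(\<Sum>k\<le>Suc n. g k) = (\<Sum>k\<le>n. g k)"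
    by (simp add: g_def)
  have g2: "(\<Sum>k\<le>Suc n. g k) = g 0 + (\<Sum>k\<le>n. g (Suc k))"
    by (rule sum.atMost_Suc_shift)
  have lhs: "(\<Sum>k\<le>n. of_nat (n choose k) * (-1) ^ (n - k) * (a (Suc k) (n - k) - a k (Suc (n - k))))
      = (\<Sum>k\<le>n. h k) + (\<Sum>k\<le>n. g k)"
    unfolding g_def h_def by (simp add: sum.distrib[symmetric] Suc_diff_le algebra_simps)
  have rhs: "(\<Sum>k\<le>Suc n. of_nat (Suc n choose k) * (-1) ^ (Suc n - k) * a k (Suc n - k))
      = g 0 + (\<Sum>k\<le>n. h k) + (\<Sum>k\<le>n. g (Suc k))"
    unfolding sum.atMost_Suc_shift g_def h_def by (simp add: sum.distrib algebra_simps)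
  show ?thesis unfolding lhs rhs using g1 g2 by simp
qed

lemma adpow_binom:
  "adpow D W H n B = (\<lambda>\<sigma> \<tau>. \<Sum>k\<le>n. of_nat (n choose k) * (-1) ^ (n - k) *
       ((\<lambda>B. mmul D W H B) ^^ k) (((\<lambda>B. mmul D W B H) ^^ (n - k)) B) \<sigma> \<tau>)"
proof (induction n arbitrary: B)
  case 0 then show ?case by simp
next
  case (Suc n)
  let ?L = "\<lambda>B. mmul D W H B" and ?R = "\<lambda>B. mmul D W B H"
  have linL: "(?L ^^ k) (\<lambda>\<sigma> \<tau>. B \<sigma> \<tau> - B' \<sigma> \<tau>) = (\<lambda>\<sigma> \<tau>. (?L ^^ k) B \<sigma> \<tau> - (?L ^^ k) B' \<sigma> \<tau>)" for k B B'
    by (rule funpow_lin_diff) (simp add: mmul_diff_right)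
  have linR: "(?R ^^ k) (\<lambda>\<sigma> \<tau>. B \<sigma> \<tau> - B' \<sigma> \<tau>) = (\<lambda>\<sigma> \<tau>. (?R ^^ k) B \<sigma> \<tau> - (?R ^^ k) B' \<sigma> \<tau>)" for k B B'
    by (rule funpow_lin_diff) (simp add: mmul_diff_left)
  have step: "(?L ^^ k) ((?R ^^ m) (adm D W H B)) \<sigma> \<tau>
      = (?L ^^ Suc k) ((?R ^^ m) B) \<sigma> \<tau> - (?L ^^ k) ((?R ^^ Suc m) B) \<sigma> \<tau>" for k m \<sigma> \<tau>
  proof -
    have "(?R ^^ m) (adm D W H B) = (\<lambda>\<sigma> \<tau>. (?R ^^ m) (?L B) \<sigma> \<tau> - (?R ^^ m) (?R B) \<sigma> \<tau>)"
      unfolding adm_def by (rule linR)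
    also have "(?R ^^ m) (?L B) = ?L ((?R ^^ m) B)" by (rule R_L_comm)
    also have "(?R ^^ m) (?R B) = (?R ^^ Suc m) B" by (simp only: funpow_Suc_right comp_def)
    finally show ?thesis
      by (simp only: linL funpow_Suc_right comp_def)
  qed
  have "adpow D W H (Suc n) B \<sigma> \<tau> = (\<Sum>k\<le>Suc n. of_nat (Suc n choose k) * (-1) ^ (Suc n - k) *
       (?L ^^ k) ((?R ^^ (Suc n - k)) B) \<sigma> \<tau>)" for \<sigma> \<tau>
  proof -
    have "adpow D W H (Suc n) B \<sigma> \<tau> = (\<Sum>k\<le>n. of_nat (n choose k) * (-1) ^ (n - k) *
       ((?L ^^ Suc k) ((?R ^^ (n - k)) B) \<sigma> \<tau> - (?L ^^ k) ((?R ^^ Suc (n - k)) B) \<sigma> \<tau>))"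
      by (simp add: Suc.IH step)
    also have "\<dots> = (\<Sum>k\<le>Suc n. of_nat (Suc n choose k) * (-1) ^ (Suc n - k) *
       (?L ^^ k) ((?R ^^ (Suc n - k)) B) \<sigma> \<tau>)"
      by (rule pascal_aux[where a = "\<lambda>k m. (?L ^^ k) ((?R ^^ m) B) \<sigma> \<tau>"])
    finally show ?thesis .
  qed
  then show ?case by (intro ext)
qed



lemma mmul_mone_left: "finite W \<Longrightarrow> \<sigma> \<in> cfgs D W \<Longrightarrow> mmul D W mone X \<sigma> \<tau> = X \<sigma> \<tau>"
proof -
  assume "finite W" "\<sigma> \<in> cfgs D W"
  moreover have "mmul D W mone X \<sigma> \<tau> = (\<Sum>\<rho>\<in>cfgs D W. if \<sigma> = \<rho> then X \<rho> \<tau> else 0)"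
    unfolding mmul_def mone_def by (intro sum.cong) auto
  ultimately show ?thesis by (simp add: finite_cfgs)
qed

lemma mmul_mone_right: "finite W \<Longrightarrow> \<tau> \<in> cfgs D W \<Longrightarrow> mmul D W X mone \<sigma> \<tau> = X \<sigma> \<tau>"
proof -
  assume "finite W" "\<tau> \<in> cfgs D W"
  moreover have "mmul D W X mone \<sigma> \<tau> = (\<Sum>\<rho>\<in>cfgs D W. if \<rho> = \<tau> then X \<sigma> \<rho> else 0)"
    unfolding mmul_def mone_def by (intro sum.cong) auto
  ultimately show ?thesis by (simp add: finite_cfgs)
qed

lemma Lpow:
  assumes W: "finite W"
  shows "\<sigma> \<in> cfgs D W \<Longrightarrow> \<tau> \<in> cfgs D W \<Longrightarrow> ((\<lambda>B. mmul D W H B) ^^ k) X \<sigma> \<tau> = mmul D W (mpow D W H k) X \<sigma> \<tau>"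
proof (induction k arbitrary: \<sigma> \<tau>)
  case 0 then show ?case by (simp add: mmul_mone_left[OF W])
next
  case (Suc k)
  have "((\<lambda>B. mmul D W H B) ^^ Suc k) X \<sigma> \<tau> = mmul D W H (((\<lambda>B. mmul D W H B) ^^ k) X) \<sigma> \<tau>" by simp
  also have "\<dots> = mmul D W H (mmul D W (mpow D W H k) X) \<sigma> \<tau>"
    by (rule mmul_cong) (use Suc in auto)
  also have "\<dots> = mmul D W (mpow D W H (Suc k)) X \<sigma> \<tau>" by (simp add: mmul_assoc)
  finally show ?case .
qed

lemma mpow_comm:
  assumes W: "finite W"
  shows "\<sigma> \<in> cfgs D W \<Longrightarrow> \<tau> \<in> cfgs D W \<Longrightarrow> mmul D W (mpow D W H m) H \<sigma> \<tau> = mpow D W H (Suc m) \<sigma> \<tau>"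
proof (induction m arbitrary: \<sigma> \<tau>)
  case 0 then show ?case by (simp add: mmul_mone_left[OF W] mmul_mone_right[OF W])
next
  case (Suc m)
  have "mmul D W (mpow D W H (Suc m)) H \<sigma> \<tau> = mmul D W H (mmul D W (mpow D W H m) H) \<sigma> \<tau>"
    by (simp add: mmul_assoc)
  also have "\<dots> = mmul D W H (mpow D W H (Suc m)) \<sigma> \<tau>"
    by (rule mmul_cong) (use Suc in auto)
  finally show ?case by simp
qed

lemma Rpow:
  assumes W: "finite W"
  shows "\<sigma> \<in> cfgs D W \<Longrightarrow> \<tau> \<in> cfgs D W \<Longrightarrow> ((\<lambda>B. mmul D W B H) ^^ m) X \<sigma> \<tau> = mmul D W X (mpow D W H m) \<sigma> \<tau>"
proof (induction m arbitrary: \<sigma> \<tau>)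
  case 0 then show ?case by (simp add: mmul_mone_right[OF W])
next
  case (Suc m)
  have "((\<lambda>B. mmul D W B H) ^^ Suc m) X \<sigma> \<tau> = mmul D W (((\<lambda>B. mmul D W B H) ^^ m) X) H \<sigma> \<tau>" by simp
  also have "\<dots> = mmul D W (mmul D W X (mpow D W H m)) H \<sigma> \<tau>"
    by (rule mmul_cong) (use Suc in auto)
  also have "\<dots> = mmul D W X (mmul D W (mpow D W H m) H) \<sigma> \<tau>" by (simp add: mmul_assoc)
  also have "\<dots> = mmul D W X (mpow D W H (Suc m)) \<sigma> \<tau>"
    by (rule mmul_cong) (use Suc mpow_comm[OF W] in auto)
  finally show ?case .
qed

lemma adpow_mpow:
  assumes W: "finite W" and s: "\<sigma> \<in> cfgs D W" and t: "\<tau> \<in> cfgs D W"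
  shows "adpow D W H n B \<sigma> \<tau> = (\<Sum>k\<le>n. of_nat (n choose k) * (-1) ^ (n - k) *
            mmul D W (mpow D W H k) (mmul D W B (mpow D W H (n - k))) \<sigma> \<tau>)"
proof -
  have "((\<lambda>B. mmul D W H B) ^^ k) (((\<lambda>B. mmul D W B H) ^^ m) B) \<sigma> \<tau>
      = mmul D W (mpow D W H k) (mmul D W B (mpow D W H m)) \<sigma> \<tau>" for k m
  proof -
    have "((\<lambda>B. mmul D W H B) ^^ k) (((\<lambda>B. mmul D W B H) ^^ m) B) \<sigma> \<tau>
        = mmul D W (mpow D W H k) (((\<lambda>B. mmul D W B H) ^^ m) B) \<sigma> \<tau>" by (rule Lpow[OF W s t])
    also have "\<dots> = mmul D W (mpow D W H k) (mmul D W B (mpow D W H m)) \<sigma> \<tau>"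
      by (rule mmul_cong[OF s t]) (use Rpow[OF W] in auto)
    finally show ?thesis .
  qed
  then show ?thesis by (simp add: adpow_binom)
qed

lemma mpow_scale: "mpow D W (\<lambda>\<sigma> \<tau>. c * H \<sigma> \<tau>) n = (\<lambda>\<sigma> \<tau>. c ^ n * mpow D W H n \<sigma> \<tau>)"
proof (induction n)
  case 0 show ?case by (simp add: mone_def)
next
  case (Suc n)
  show ?case by (simp add: Suc mmul_def sum_distrib_left mult_ac)
qed

lemma mpow_bound:
  assumes W: "finite W"
  shows "\<sigma> \<in> cfgs D W \<Longrightarrow> \<rho> \<in> cfgs D W \<Longrightarrow>
    cmod (mpow D W H k \<sigma> \<rho>) \<le> (real (card (cfgs D W)) * (\<Sum>\<sigma>\<in>cfgs D W. \<Sum>\<tau>\<in>cfgs D W. cmod (H \<sigma> \<tau>))) ^ k"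
proof (induction k arbitrary: \<sigma> \<rho>)
  case 0 then show ?case by (simp add: mone_def)
next
  case (Suc k)
  let ?M = "(\<Sum>\<sigma>\<in>cfgs D W. \<Sum>\<tau>\<in>cfgs D W. cmod (H \<sigma> \<tau>))"
  let ?N = "real (card (cfgs D W))"
  have fin: "finite (cfgs D W)" using W by (rule finite_cfgs)
  have HM: "cmod (H \<sigma>' \<tau>') \<le> ?M" if "\<sigma>' \<in> cfgs D W" "\<tau>' \<in> cfgs D W" for \<sigma>' \<tau>'
  proof -
    have "cmod (H \<sigma>' \<tau>') \<le> (\<Sum>\<tau>\<in>cfgs D W. cmod (H \<sigma>' \<tau>))"
      by (rule member_le_sum) (use that fin in auto)
    also have "\<dots> \<le> ?M"
      by (rule member_le_sum[of _ _ "\<lambda>\<sigma>. \<Sum>\<tau>\<in>cfgs D W. cmod (H \<sigma> \<tau>)"]) (use that fin in \<open>auto intro: sum_nonneg\<close>)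
    finally show ?thesis .
  qed
  have "cmod (mpow D W H (Suc k) \<sigma> \<rho>) \<le> (\<Sum>\<rho>'\<in>cfgs D W. cmod (H \<sigma> \<rho>') * cmod (mpow D W H k \<rho>' \<rho>))"
    by (simp add: mmul_def norm_mult[symmetric] norm_sum)
  also have "\<dots> \<le> (\<Sum>\<rho>'\<in>cfgs D W. ?M * (?N * ?M) ^ k)"
    by (intro sum_mono mult_mono HM Suc.prems Suc.IH) (auto intro!: sum_nonneg)
  also have "\<dots> = (?N * ?M) ^ Suc k" by simp
  finally show ?case .
qed

lemma mexp_sums:
  assumes W: "finite W" and s: "\<sigma> \<in> cfgs D W" and r: "\<rho> \<in> cfgs D W"
  shows "summable (\<lambda>k. norm (d ^ k * mpow D W H k \<sigma> \<rho> / of_nat (fact k)))"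
    and "(\<lambda>k. d ^ k * mpow D W H k \<sigma> \<rho> / of_nat (fact k)) sums mexp D W (\<lambda>\<sigma> \<tau>. d * H \<sigma> \<tau>) \<sigma> \<rho>"
proof -
  let ?M = "(\<Sum>\<sigma>\<in>cfgs D W. \<Sum>\<tau>\<in>cfgs D W. cmod (H \<sigma> \<tau>))"
  let ?N = "real (card (cfgs D W))"
  have "summable (\<lambda>n. inverse (fact n) * (cmod d * (?N * ?M)) ^ n)" by (rule summable_exp)
  then show sa: "summable (\<lambda>k. norm (d ^ k * mpow D W H k \<sigma> \<rho> / of_nat (fact k)))"
  proof (rule summable_comparison_test[rotated], intro exI allI impI)
    fix n :: nat
    have "norm (norm (d ^ n * mpow D W H n \<sigma> \<rho> / of_nat (fact n))) = cmod d ^ n * cmod (mpow D W H n \<sigma> \<rho>) / fact n"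
      by (simp add: norm_mult norm_divide norm_power)
    also have "\<dots> \<le> cmod d ^ n * (?N * ?M) ^ n / fact n"
      by (intro divide_right_mono mult_left_mono mpow_bound[OF W s r]) auto
    also have "\<dots> = inverse (fact n) * (cmod d * (?N * ?M)) ^ n"
      by (simp add: power_mult_distrib field_simps)
    finally show "norm (norm (d ^ n * mpow D W H n \<sigma> \<rho> / of_nat (fact n))) \<le> inverse (fact n) * (cmod d * (?N * ?M)) ^ n" .
  qed
  have "(\<lambda>k. d ^ k * mpow D W H k \<sigma> \<rho> / of_nat (fact k)) sums (\<Sum>k. d ^ k * mpow D W H k \<sigma> \<rho> / of_nat (fact k))"
    by (rule summable_sums[OF summable_norm_cancel[OF sa]])
  then show "(\<lambda>k. d ^ k * mpow D W H k \<sigma> \<rho> / of_nat (fact k)) sums mexp D W (\<lambda>\<sigma> \<tau>. d * H \<sigma> \<tau>) \<sigma> \<rho>"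
    by (simp add: mexp_def mpow_scale)
qed



lemma coef_aux: "(A::complex) \<noteq> 0 \<Longrightarrow> x * y / A * (A / (B * C) * z) = x / B * (z * y / C)"
  by (simp add: field_simps)
lemma coef_eq:
  fixes c :: complex
  assumes "k \<le> n"
  shows "c ^ n / of_nat (fact n) * (of_nat (n choose k) * (-1) ^ (n - k))
       = (c ^ k / of_nat (fact k)) * ((- c) ^ (n - k) / of_nat (fact (n - k)))"
proof -
  have cn: "c ^ n = c ^ k * c ^ (n - k)" using assms by (metis le_add_diff_inverse power_add)
  have b: "(of_nat (n choose k) :: complex) = fact n / (fact k * fact (n - k))" by (rule binomial_fact[OF assms])
  have m: "(- c) ^ (n - k) = (-1) ^ (n - k) * c ^ (n - k)" by (rule power_minus)
  have nz: "(fact n :: complex) \<noteq> 0" by simp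
  have "c ^ n / of_nat (fact n) * (of_nat (n choose k) * (-1) ^ (n - k))
     = c ^ k * c ^ (n - k) / fact n * (fact n / (fact k * fact (n - k)) * (-1) ^ (n - k))"
    by (simp only: cn b of_nat_fact)
  also have "\<dots> = c ^ k / fact k * ((-1) ^ (n - k) * c ^ (n - k) / fact (n - k))"
    by (rule coef_aux[OF nz])
  finally show ?thesis by (simp only: m of_nat_fact)
qed

lemma gam_sums:
  assumes W: "finite W" and s: "\<sigma> \<in> cfgs D W" and t: "\<tau> \<in> cfgs D W"
  shows "(\<lambda>n. ((\<i> * s) ^ n / of_nat (fact n)) * adpow D W H n B \<sigma> \<tau>) sums gam D W H s B \<sigma> \<tau>"
proof -
  define c where "c = \<i> * s"
  define a where "a \<rho> k = c ^ k * mpow D W H k \<sigma> \<rho> / of_nat (fact k)" for \<rho> k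
  define b where "b \<rho>' m = (- c) ^ m * mpow D W H m \<rho>' \<tau> / of_nat (fact m)" for \<rho>' m
  define E1 where "E1 \<rho> = mexp D W (\<lambda>\<sigma> \<tau>. c * H \<sigma> \<tau>) \<sigma> \<rho>" for \<rho>
  define E2 where "E2 \<rho>' = mexp D W (\<lambda>\<sigma> \<tau>. (- c) * H \<sigma> \<tau>) \<rho>' \<tau>" for \<rho>'
  let ?C = "cfgs D W"
  have e2: "(\<lambda>\<sigma> \<tau>. - \<i> * s * H \<sigma> \<tau>) = (\<lambda>\<sigma> \<tau>. (- c) * H \<sigma> \<tau>)" by (simp add: c_def)
  have g: "gam D W H s B \<sigma> \<tau> = (\<Sum>\<rho>'\<in>?C. \<Sum>\<rho>\<in>?C. B \<rho> \<rho>' * (E1 \<rho> * E2 \<rho>'))"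
  proof -
    have "gam D W H s B \<sigma> \<tau> = (\<Sum>\<rho>'\<in>?C. \<Sum>\<rho>\<in>?C. (E1 \<rho> * B \<rho> \<rho>') * E2 \<rho>')"
      unfolding gam_def e2 unfolding mmul_def E1_def E2_def c_def by (simp only: sum_distrib_right)
    also have "\<dots> = (\<Sum>\<rho>'\<in>?C. \<Sum>\<rho>\<in>?C. B \<rho> \<rho>' * (E1 \<rho> * E2 \<rho>'))"
      by (intro sum.cong refl) (simp only: mult.assoc mult.commute mult.left_commute)
    finally show ?thesis .
  qed
  have cp: "(\<lambda>n. \<Sum>k\<le>n. a \<rho> k * b \<rho>' (n - k)) sums (E1 \<rho> * E2 \<rho>')" if r: "\<rho> \<in> ?C" "\<rho>' \<in> ?C" for \<rho> \<rho>'
  proof -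
    have sa: "summable (\<lambda>k. norm (a \<rho> k))" unfolding a_def by (rule mexp_sums(1)[OF W s r(1)])
    have sb: "summable (\<lambda>k. norm (b \<rho>' k))" unfolding b_def by (rule mexp_sums(1)[OF W r(2) t])
    have ea: "(\<Sum>k. a \<rho> k) = E1 \<rho>" unfolding a_def E1_def by (rule sums_unique[symmetric], rule mexp_sums(2)[OF W s r(1)])
    have eb: "(\<Sum>k. b \<rho>' k) = E2 \<rho>'" unfolding b_def E2_def by (rule sums_unique[symmetric], rule mexp_sums(2)[OF W r(2) t])
    show ?thesis using Cauchy_product_sums[OF sa sb] unfolding ea eb .
  qed
  have S: "(\<lambda>n. \<Sum>\<rho>'\<in>?C. \<Sum>\<rho>\<in>?C. B \<rho> \<rho>' * (\<Sum>k\<le>n. a \<rho> k * b \<rho>' (n - k))) sums gam D W H s B \<sigma> \<tau>"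
    unfolding g by (intro sums_sum sums_mult cp)
  have T: "(\<Sum>\<rho>'\<in>?C. \<Sum>\<rho>\<in>?C. B \<rho> \<rho>' * (\<Sum>k\<le>n. a \<rho> k * b \<rho>' (n - k)))
         = ((\<i> * s) ^ n / of_nat (fact n)) * adpow D W H n B \<sigma> \<tau>" for n
  proof -
    have "(\<Sum>\<rho>'\<in>?C. \<Sum>\<rho>\<in>?C. B \<rho> \<rho>' * (\<Sum>k\<le>n. a \<rho> k * b \<rho>' (n - k)))
        = (\<Sum>\<rho>'\<in>?C. \<Sum>\<rho>\<in>?C. \<Sum>k\<le>n. B \<rho> \<rho>' * (a \<rho> k * b \<rho>' (n - k)))"
      by (simp add: sum_distrib_left)
    also have "\<dots> = (\<Sum>\<rho>\<in>?C. \<Sum>\<rho>'\<in>?C. \<Sum>k\<le>n. B \<rho> \<rho>' * (a \<rho> k * b \<rho>' (n - k)))"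
      by (rule sum.swap)
    also have "\<dots> = (\<Sum>\<rho>\<in>?C. \<Sum>k\<le>n. \<Sum>\<rho>'\<in>?C. B \<rho> \<rho>' * (a \<rho> k * b \<rho>' (n - k)))"
      by (intro sum.cong refl sum.swap)
    also have "\<dots> = (\<Sum>k\<le>n. \<Sum>\<rho>\<in>?C. \<Sum>\<rho>'\<in>?C. B \<rho> \<rho>' * (a \<rho> k * b \<rho>' (n - k)))"
      by (rule sum.swap)
    also have "\<dots> = (\<Sum>k\<le>n. \<Sum>\<rho>\<in>?C. \<Sum>\<rho>'\<in>?C. c ^ n / of_nat (fact n) * (of_nat (n choose k) * (-1) ^ (n - k))
                      * (mpow D W H k \<sigma> \<rho> * (B \<rho> \<rho>' * mpow D W H (n - k) \<rho>' \<tau>)))"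
    proof (intro sum.cong refl)
      fix k \<rho> \<rho>' assume "k \<in> {..n}"
      then have k: "k \<le> n" by simp
      show "B \<rho> \<rho>' * (a \<rho> k * b \<rho>' (n - k)) = c ^ n / of_nat (fact n) * (of_nat (n choose k) * (-1) ^ (n - k))
                      * (mpow D W H k \<sigma> \<rho> * (B \<rho> \<rho>' * mpow D W H (n - k) \<rho>' \<tau>))"
        unfolding coef_eq[OF k] a_def b_def by (simp only: times_divide_eq_right times_divide_eq_left mult.assoc mult.commute mult.left_commute)
    qed
    also have "\<dots> = c ^ n / of_nat (fact n) * (\<Sum>k\<le>n. of_nat (n choose k) * (-1) ^ (n - k) *
            mmul D W (mpow D W H k) (mmul D W B (mpow D W H (n - k))) \<sigma> \<tau>)"
      by (simp only: mmul_def sum_distrib_left mult.assoc)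
    also have "\<dots> = ((\<i> * s) ^ n / of_nat (fact n)) * adpow D W H n B \<sigma> \<tau>"
      by (simp add: adpow_mpow[OF W s t] c_def)
    finally show ?thesis .
  qed
  show ?thesis using S unfolding T .
qed



lemma exp_ge_pow: "0 \<le> (y::real) \<Longrightarrow> y ^ n / fact n \<le> exp y"
proof -
  assume y: "0 \<le> y"
  have s: "(\<lambda>n. y ^ n /\<^sub>R fact n) sums exp y" by (rule exp_converges)
  have "(\<Sum>i\<in>{n}. y ^ i /\<^sub>R fact i) \<le> (\<Sum>i. y ^ i /\<^sub>R fact i)"
    by (rule sum_le_suminf) (use s y in \<open>auto simp: sums_iff\<close>)
  then show ?thesis using sums_unique[OF s] by (simp add: divide_inverse_commute)
qed

lemma pow_aux: "(t::real) > 0 \<Longrightarrow> a * b = e \<Longrightarrow> t ^ Suc n * a * b / t = t ^ n * e"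
  by (auto simp: field_simps)

lemma comb_bound:
  fixes P :: "'v set set" and w :: "'v set \<Rightarrow> real" and lam Phn :: real
  assumes finP: "finite P" and finX: "\<And>X. X \<in> P \<Longrightarrow> finite X"
    and wnn: "\<And>X. X \<in> P \<Longrightarrow> 0 \<le> w X"
    and Hx: "\<And>x. (\<Sum>X\<in>P. if x \<in> X then w X * exp (lam * real (card X)) else 0) \<le> Phn"
    and Phn: "0 \<le> Phn"
  shows "finite S0 \<Longrightarrow> (\<And>k::nat. (real (card S0) + real k) ^ n * exp (- lam * real k) \<le> M) \<Longrightarrow>
     (\<Sum>xs\<in>{xs. set xs \<subseteq> P \<and> length xs = n}. if conn S0 xs then prod_list (map w xs) else 0) \<le> Phn ^ n * M"
proof (induction n arbitrary: S0 M)
  case 0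
  have "{xs. set xs \<subseteq> P \<and> length xs = 0} = {[]}" by auto
  then show ?case using "0.prems"(2)[of 0] by simp
next
  case (Suc n)
  note fin = Suc.prems(1) and hyp = Suc.prems(2)
  let ?L = "{xs. set xs \<subseteq> P \<and> length xs = n}"
  let ?T = "\<lambda>S. (\<Sum>xs\<in>?L. if conn S xs then prod_list (map w xs) else 0)"
  have M0: "0 \<le> M" using hyp[of 0] by (smt (verit) exp_ge_zero mult_nonneg_nonneg of_nat_0_le_iff zero_le_power)
  have eq: "(\<Sum>xs\<in>{xs. set xs \<subseteq> P \<and> length xs = Suc n}. if conn S0 xs then prod_list (map w xs) else 0)
     = (\<Sum>X\<in>P. if X \<inter> S0 \<noteq> {} then w X * ?T (S0 \<union> X) else 0)"
    unfolding sum_lists_Suc[OF finP]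
  proof (intro sum.cong refl)
    fix X assume "X \<in> P"
    show "(\<Sum>xs\<in>?L. if conn S0 (X # xs) then prod_list (map w (X # xs)) else 0)
        = (if X \<inter> S0 \<noteq> {} then w X * ?T (S0 \<union> X) else 0)"
    proof (cases "X \<inter> S0 = {}")
      case True then show ?thesis by simp
    next
      case False
      have "(\<Sum>xs\<in>?L. if conn S0 (X # xs) then prod_list (map w (X # xs)) else 0)
          = (\<Sum>xs\<in>?L. w X * (if conn (S0 \<union> X) xs then prod_list (map w xs) else 0))"
        using False by (intro sum.cong refl) simp
      then show ?thesis using False by (simp add: sum_distrib_left)
    qed
  qed
  show ?case
  proof (cases "S0 = {}")
    case True
    have "(\<Sum>X\<in>P. if X \<inter> S0 \<noteq> {} then w X * ?T (S0 \<union> X) else 0) = 0" using True by simp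
    then show ?thesis unfolding eq using M0 Phn by simp
  next
    case False
    let ?c = "real (card S0)"
    have c: "1 \<le> ?c" using False fin by (simp add: Suc_leI card_gt_0_iff)
    have IH: "?T (S0 \<union> X) \<le> Phn ^ n * (M * exp (lam * real (card X)) / ?c)" if X: "X \<in> P" for X
    proof (rule Suc.IH)
      show "finite (S0 \<union> X)" using fin finX[OF X] by simp
      fix k :: nat
      let ?t = "?c + real (card X) + real k"
      have t1: "?c \<le> ?t" by simp
      have "real (card (S0 \<union> X)) \<le> ?c + real (card X)"
        using card_Un_le[of S0 X] by linarith
      then have "(real (card (S0 \<union> X)) + real k) ^ n \<le> ?t ^ n" by (intro power_mono) auto
      then have "(real (card (S0 \<union> X)) + real k) ^ n * exp (- lam * real k) \<le> ?t ^ n * exp (- lam * real k)"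
        by (simp add: mult_right_mono)
      also have "\<dots> = ?t ^ Suc n * exp (- lam * real (card X + k)) * exp (lam * real (card X)) / ?t"
      proof -
        have e: "exp (- lam * real (card X + k)) * exp (lam * real (card X)) = exp (- lam * real k)"
          by (simp add: exp_add[symmetric] algebra_simps)
        have tp: "?t > 0" using c by linarith
        show ?thesis by (rule pow_aux[OF tp e, symmetric])
      qed
      also have "\<dots> \<le> M * exp (lam * real (card X)) / ?t"
      proof -
        have "?t ^ Suc n * exp (- lam * real (card X + k)) \<le> M"
          using hyp[of "card X + k"] by (simp add: add.assoc)
        then show ?thesis using c by (intro divide_right_mono mult_right_mono) auto
      qed
      also have "\<dots> \<le> M * exp (lam * real (card X)) / ?c"
        using c M0 by (intro divide_left_mono) auto
      finally show "(real (card (S0 \<union> X)) + real k) ^ n * exp (- lam * real k) \<le> M * exp (lam * real (card X)) / ?c" .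
    qed
    have "(\<Sum>X\<in>P. if X \<inter> S0 \<noteq> {} then w X * ?T (S0 \<union> X) else 0)
        \<le> (\<Sum>X\<in>P. if X \<inter> S0 \<noteq> {} then w X * (Phn ^ n * (M * exp (lam * real (card X)) / ?c)) else 0)"
    proof (intro sum_mono)
      fix X assume X: "X \<in> P"
      show "(if X \<inter> S0 \<noteq> {} then w X * ?T (S0 \<union> X) else 0)
          \<le> (if X \<inter> S0 \<noteq> {} then w X * (Phn ^ n * (M * exp (lam * real (card X)) / ?c)) else 0)"
        using mult_left_mono[OF IH[OF X] wnn[OF X]] by (simp only: if_split) simp
    qed
    also have "\<dots> \<le> (\<Sum>X\<in>P. \<Sum>x\<in>S0. (if x \<in> X then w X * exp (lam * real (card X)) else 0) * (Phn ^ n * M / ?c))"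
    proof (intro sum_mono)
      fix X assume X: "X \<in> P"
      have nn: "0 \<le> w X * exp (lam * real (card X)) * (Phn ^ n * M / ?c)"
        using wnn[OF X] M0 Phn c by simp
      show "(if X \<inter> S0 \<noteq> {} then w X * (Phn ^ n * (M * exp (lam * real (card X)) / ?c)) else 0)
          \<le> (\<Sum>x\<in>S0. (if x \<in> X then w X * exp (lam * real (card X)) else 0) * (Phn ^ n * M / ?c))"
      proof (cases "X \<inter> S0 = {}")
        case True
        have "0 \<le> (\<Sum>x\<in>S0. (if x \<in> X then w X * exp (lam * real (card X)) else 0) * (Phn ^ n * M / ?c))"
          by (rule sum_nonneg) (use True in auto)
        then show ?thesis using True by simp
      next
        case False
        then obtain x0 where x0: "x0 \<in> X" "x0 \<in> S0" by blast
        have "w X * (Phn ^ n * (M * exp (lam * real (card X)) / ?c))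
            = (if x0 \<in> X then w X * exp (lam * real (card X)) else 0) * (Phn ^ n * M / ?c)"
          using x0 by simp
        also have "\<dots> \<le> (\<Sum>x\<in>S0. (if x \<in> X then w X * exp (lam * real (card X)) else 0) * (Phn ^ n * M / ?c))"
          by (rule member_le_sum[OF x0(2)]) (use fin nn in auto)
        finally show ?thesis using False by simp
      qed
    qed
    also have "\<dots> = (\<Sum>x\<in>S0. (\<Sum>X\<in>P. if x \<in> X then w X * exp (lam * real (card X)) else 0) * (Phn ^ n * M / ?c))"
      by (subst sum.swap) (simp add: sum_distrib_right sum_divide_distrib)
    also have "\<dots> \<le> (\<Sum>x\<in>S0. Phn * (Phn ^ n * M / ?c))"
      using M0 Phn c by (intro sum_mono mult_right_mono Hx) auto
    also have "\<dots> = Phn ^ Suc n * M" using c by simp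
    finally show ?thesis unfolding eq .
  qed
qed

lemma conn_dist:
  fixes S0 :: "'v::metric_space set"
  shows "conn S0 xs \<Longrightarrow> (\<And>X. X \<in> set xs \<Longrightarrow> finite X) \<Longrightarrow> p \<in> S0 \<union> \<Union>(set xs) \<Longrightarrow>
    \<exists>z\<in>S0. dist z p \<le> sum_list (map diameter xs)"
proof (induction xs arbitrary: S0)
  case Nil then show ?case by auto
next
  case (Cons X xs)
  have fX: "finite X" using Cons.prems by simp
  have c: "X \<inter> S0 \<noteq> {}" "conn (S0 \<union> X) xs" using Cons.prems by auto
  have "p \<in> (S0 \<union> X) \<union> \<Union>(set xs)" using Cons.prems by auto
  then obtain z' where z': "z' \<in> S0 \<union> X" "dist z' p \<le> sum_list (map diameter xs)"
    using Cons.IH[OF c(2)] Cons.prems(2) by auto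
  have d0: "0 \<le> diameter X" using fX by (simp add: diameter_ge_0 finite_imp_bounded)
  show ?case
  proof (cases "z' \<in> S0")
    case True then show ?thesis using z' d0 by (intro bexI[of _ z']) auto
  next
    case False
    then have zX: "z' \<in> X" using z' by simp
    obtain q where q: "q \<in> X" "q \<in> S0" using c by blast
    have "dist q z' \<le> diameter X" using fX q zX by (intro diameter_bounded_bound finite_imp_bounded)
    then have "dist q p \<le> diameter X + sum_list (map diameter xs)"
      using dist_triangle[of q p z'] z' by linarith
    then show ?thesis using q by auto
  qed
qed

lemma prod_w: "prod_list (map (\<lambda>X. f X * exp (mu * diameter X)) xs)
   = prod_list (map f xs) * exp (mu * sum_list (map diameter xs))"
  by (induction xs) (simp_all add: distrib_left exp_add)



lemma Hx_inorm:
  fixes \<Phi> :: "'v::metric_space set \<Rightarrow> 'v mat"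
  assumes fin: "inorm_e D lam mu \<Phi> < \<infinity>" and P: "finite P" and PX: "\<And>X. X \<in> P \<Longrightarrow> finite X"
  shows "(\<Sum>X\<in>P. if x \<in> X then (opnorm D X (\<Phi> X) * exp (mu * diameter X)) * exp (lam * real (card X)) else 0)
         \<le> inorm D lam mu \<Phi>"
proof -
  define g where "g X = opnorm D X (\<Phi> X) * exp (lam * real (card X) + mu * diameter X)" for X
  let ?F = "{X \<in> P. x \<in> X}"
  have eq: "(\<Sum>X\<in>P. if x \<in> X then (opnorm D X (\<Phi> X) * exp (mu * diameter X)) * exp (lam * real (card X)) else 0)
      = sum g ?F"
    unfolding sum.inter_filter[OF P] g_def by (intro sum.cong refl) (simp add: exp_add mult_ac)
  have gnn: "0 \<le> g X" if "X \<in> ?F" for X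
    using that PX by (simp add: g_def opnorm_nonneg)
  have F: "finite ?F" using P by simp
  have sub: "?F \<subseteq> {X. finite X \<and> x \<in> X}" using PX by auto
  have "ennreal (sum g ?F) = (\<Sum>X\<in>?F. ennreal (g X))" by (rule sym, rule sum_ennreal) (use gnn in auto)
  also have "\<dots> = infsum (\<lambda>X. ennreal (g X)) ?F" using F by simp
  also have "\<dots> \<le> infsum (\<lambda>X. ennreal (g X)) {X. finite X \<and> x \<in> X}"
    by (rule infsum_mono_neutral) (use sub in \<open>auto intro: nonneg_summable_on_complete\<close>)
  also have "\<dots> \<le> inorm_e D lam mu \<Phi>"
    unfolding inorm_e_def g_def by (rule SUP_upper) simp
  finally have le: "ennreal (sum g ?F) \<le> inorm_e D lam mu \<Phi>" .
  have snn: "0 \<le> sum g ?F" by (rule sum_nonneg) (use gnn in auto)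
  have "sum g ?F = enn2real (ennreal (sum g ?F))" using snn by simp
  also have "\<dots> \<le> enn2real (inorm_e D lam mu \<Phi>)" by (rule enn2real_mono[OF le]) (use fin in simp)
  finally show ?thesis unfolding eq inorm_def .
qed

lemma M_bound:
  assumes lam: "lam > 0"
  shows "(real c + real k) ^ n * exp (- lam * real k) \<le> exp (lam * real c) * fact n / lam ^ n"
proof -
  let ?t = "real c + real k"
  have "(lam * ?t) ^ n / fact n \<le> exp (lam * ?t)" by (rule exp_ge_pow) (use lam in simp)
  then have "lam ^ n * ?t ^ n \<le> exp (lam * ?t) * fact n" by (simp add: power_mult_distrib divide_le_eq)
  then have "lam ^ n * (?t ^ n * exp (- lam * real k)) \<le> exp (lam * ?t) * fact n * exp (- lam * real k)"
    by (simp add: mult.assoc[symmetric] mult_right_mono)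
  also have "\<dots> = exp (lam * real c) * fact n"
    by (simp add: mult_ac exp_add[symmetric] algebra_simps)
  finally show ?thesis using lam by (simp add: le_divide_eq mult.commute)
qed

lemma chain_sum_bound:
  fixes Q :: "'v mat"
  assumes W: "finite W" and Z: "Z \<subseteq> W" and LL: "finite LL"
    and LLs: "\<And>xs. xs \<in> LL \<Longrightarrow> set xs \<subseteq> Pow W \<and> length xs = n"
  shows "opnorm D W (\<lambda>\<sigma> \<tau>. \<Sum>xs\<in>LL. chain D W \<Phi> (emb Z Q) xs \<sigma> \<tau>)
     \<le> (\<Sum>xs\<in>LL. if conn Z xs then 2 ^ n * opnorm D Z Q * prod_list (map (\<lambda>X. opnorm D X (\<Phi> X)) xs) else 0)"
proof -
  have fZ: "finite Z" using W Z finite_subset by blast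
  have "opnorm D W (\<lambda>\<sigma> \<tau>. \<Sum>xs\<in>LL. chain D W \<Phi> (emb Z Q) xs \<sigma> \<tau>) \<le> (\<Sum>xs\<in>LL. opnorm D W (chain D W \<Phi> (emb Z Q) xs))"
    by (rule opnorm_sum[OF W])
  also have "\<dots> \<le> (\<Sum>xs\<in>LL. if conn Z xs then 2 ^ n * opnorm D Z Q * prod_list (map (\<lambda>X. opnorm D X (\<Phi> X)) xs) else 0)"
  proof (rule sum_mono)
    fix xs assume xs: "xs \<in> LL"
    have sx: "set xs \<subseteq> Pow W" and lx: "length xs = n" using LLs[OF xs] by auto
    show "opnorm D W (chain D W \<Phi> (emb Z Q) xs)
        \<le> (if conn Z xs then 2 ^ n * opnorm D Z Q * prod_list (map (\<lambda>X. opnorm D X (\<Phi> X)) xs) else 0)"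
    proof (cases "conn Z xs")
      case True
      have P: "0 \<le> prod_list (map (\<lambda>X. opnorm D X (\<Phi> X)) xs)"
      proof (rule prod_list_nonneg)
        fix x assume "x \<in> set (map (\<lambda>X. opnorm D X (\<Phi> X)) xs)"
        then obtain Y where Y: "Y \<in> set xs" "x = opnorm D Y (\<Phi> Y)" by auto
        then have "finite Y" using sx W by (auto intro: finite_subset)
        then show "0 \<le> x" using Y by (simp add: opnorm_nonneg)
      qed
      have "opnorm D W (chain D W \<Phi> (emb Z Q) xs) \<le> 2 ^ n * opnorm D W (emb Z Q) * prod_list (map (\<lambda>X. opnorm D X (\<Phi> X)) xs)"
        using chain_norm[OF W sx] lx by simp
      also have "\<dots> \<le> 2 ^ n * opnorm D Z Q * prod_list (map (\<lambda>X. opnorm D X (\<Phi> X)) xs)"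
        by (intro mult_right_mono mult_left_mono emb_norm[OF W Z] P) simp
      finally show ?thesis using True by simp
    next
      case False
      have "opnorm D W (chain D W \<Phi> (emb Z Q) xs) = 0"
        using chain_vanish[OF W Z loc_emb sx False] by (intro opnorm_zero[OF W]) auto
      then show ?thesis using False by simp
    qed
  qed
  finally show ?thesis .
qed

lemma geo_le: "0 \<le> (x::real) \<Longrightarrow> x < 1 \<Longrightarrow> (\<Sum>n<N. x ^ n) \<le> 1 / (1 - x)"
  by (simp add: sum_gp_strict divide_right_mono)

lemma geo_le1: "0 \<le> (x::real) \<Longrightarrow> x < 1 \<Longrightarrow> (\<Sum>n<N. if n = 0 then 0 else x ^ n) \<le> x / (1 - x)"
proof (cases N)
  case 0 then show "0 \<le> x \<Longrightarrow> x < 1 \<Longrightarrow> ?thesis" by simp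
next
  case (Suc N')
  assume x: "0 \<le> x" "x < 1"
  have "(\<Sum>n<N. if n = 0 then 0 else x ^ n) = (\<Sum>n<N'. x ^ Suc n)"
    unfolding Suc sum.lessThan_Suc_shift by simp
  also have "\<dots> = x * (\<Sum>n<N'. x ^ n)" by (simp add: sum_distrib_left)
  also have "\<dots> \<le> x * (1 / (1 - x))" by (intro mult_left_mono geo_le x)
  finally show ?thesis by simp
qed



lemma inorm_nonneg: "0 \<le> inorm D lam mu \<Phi>" by (simp add: inorm_def)

lemma prod_opn_nonneg:
  assumes "\<And>X. X \<in> set xs \<Longrightarrow> finite X"
  shows "0 \<le> prod_list (map (\<lambda>X. opnorm D X (\<Phi> X)) xs)"
  by (rule prod_list_nonneg) (use assms in \<open>auto simp: opnorm_nonneg\<close>)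

lemma sumdiam_nonneg:
  fixes xs :: "'v::metric_space set list"
  assumes "\<And>X. X \<in> set xs \<Longrightarrow> finite X"
  shows "0 \<le> sum_list (map diameter xs)"
  by (rule sum_list_nonneg) (use assms in \<open>auto intro: diameter_ge_0 finite_imp_bounded\<close>)

lemma term_scalar:
  assumes lam: "lam > 0"
  shows "cmod ((\<i> * s) ^ n / of_nat (fact n)) * (2 ^ n * q * (Phn ^ n * (exp (lam * real c) * fact n / lam ^ n)))
       = q * exp (lam * real c) * (2 * Phn * cmod s / lam) ^ n"
proof -
  have "cmod ((\<i> * s) ^ n / of_nat (fact n)) = cmod s ^ n / fact n"
    by (simp add: norm_divide norm_power norm_mult)
  then show ?thesis using lam by (simp add: power_mult_distrib power_divide field_simps)
qed

lemma part1:
  fixes \<Phi> :: "'v::metric_space set \<Rightarrow> 'v mat" and Q :: "'v mat"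
  assumes mu: "mu \<ge> 0" and fin_e: "inorm_e D lam mu \<Phi> < \<infinity>" and Z: "finite Z" and Y: "finite Y"
    and small: "2 * inorm D lam mu \<Phi> * cmod s < lam"
  shows "opnorm D (Y \<union> Z) (gam D (Y \<union> Z) (ham \<Phi> Y) s (emb Z Q))
      \<le> opnorm D Z Q * exp (lam * real (card Z)) * (lam / (lam - 2 * inorm D lam mu \<Phi> * cmod s))"
proof -
  define W where "W = Y \<union> Z"
  define Phn where "Phn = inorm D lam mu \<Phi>"
  define x where "x = 2 * Phn * cmod s / lam"
  define K where "K = opnorm D Z Q * exp (lam * real (card Z))"
  define w where "w X = opnorm D X (\<Phi> X) * exp (mu * diameter X)" for X
  have W: "finite W" using Y Z by (simp add: W_def)
  have ZW: "Z \<subseteq> W" and YW: "Y \<subseteq> W" by (auto simp: W_def)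
  have Phn: "0 \<le> Phn" by (simp add: Phn_def inorm_nonneg)
  have lam: "lam > 0" using small Phn by (smt (verit) Phn_def mult_nonneg_nonneg norm_ge_zero)
  have x0: "0 \<le> x" using Phn lam by (simp add: x_def)
  have x1: "x < 1" using small lam by (simp add: x_def Phn_def)
  have K0: "0 \<le> K" using opnorm_nonneg[OF Z] by (simp add: K_def)
  let ?F = "\<lambda>n. (\<lambda>\<sigma> \<tau>. ((\<i> * s) ^ n / of_nat (fact n)) * adpow D W (ham \<Phi> Y) n (emb Z Q) \<sigma> \<tau>)"
  have key: "opnorm D W (?F n) \<le> K * x ^ n" for n
  proof -
    let ?L = "{xs. set xs \<subseteq> Pow Y \<and> length xs = n}"
    let ?M = "exp (lam * real (card Z)) * fact n / lam ^ n"
    have Lfin: "finite ?L" using Y by (simp add: finite_lists_length_eq)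
    have Ls: "set xs \<subseteq> Pow W \<and> length xs = n" if "xs \<in> ?L" for xs using that YW by auto
    have comb: "(\<Sum>xs\<in>?L. if conn Z xs then prod_list (map w xs) else 0) \<le> Phn ^ n * ?M"
    proof (rule comb_bound[where lam = lam])
      show "finite (Pow Y)" using Y by simp
      show "finite X" if "X \<in> Pow Y" for X using that Y finite_subset by blast
      show "0 \<le> w X" if "X \<in> Pow Y" for X
        using that Y by (simp add: w_def opnorm_nonneg finite_subset)
      show "(\<Sum>X\<in>Pow Y. if y \<in> X then w X * exp (lam * real (card X)) else 0) \<le> Phn" for y
        unfolding w_def Phn_def by (rule Hx_inorm[OF fin_e]) (use Y finite_subset in auto)
      show "0 \<le> Phn" by (rule Phn)
      show "finite Z" by (rule Z)
      show "(real (card Z) + real k) ^ n * exp (- lam * real k) \<le> ?M" for k by (rule M_bound[OF lam])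
    qed
    have "opnorm D W (?F n) \<le> cmod ((\<i> * s) ^ n / of_nat (fact n)) * opnorm D W (adpow D W (ham \<Phi> Y) n (emb Z Q))"
      by (rule opnorm_scale[OF W])
    also have "opnorm D W (adpow D W (ham \<Phi> Y) n (emb Z Q))
        \<le> (\<Sum>xs\<in>?L. if conn Z xs then 2 ^ n * opnorm D Z Q * prod_list (map (\<lambda>X. opnorm D X (\<Phi> X)) xs) else 0)"
      unfolding adpow_chain[OF Y] by (rule chain_sum_bound[OF W ZW Lfin Ls])
    also have "\<dots> \<le> (\<Sum>xs\<in>?L. 2 ^ n * opnorm D Z Q * (if conn Z xs then prod_list (map w xs) else 0))"
    proof (rule sum_mono)
      fix xs assume xs: "xs \<in> ?L"
      have fx: "\<And>X. X \<in> set xs \<Longrightarrow> finite X" using xs Y finite_subset by auto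
      have "prod_list (map (\<lambda>X. opnorm D X (\<Phi> X)) xs) \<le> prod_list (map w xs)"
      proof -
        have e: "1 \<le> exp (mu * sum_list (map diameter xs))" using mu sumdiam_nonneg[OF fx] by simp
        have "prod_list (map (\<lambda>X. opnorm D X (\<Phi> X)) xs) \<le> prod_list (map (\<lambda>X. opnorm D X (\<Phi> X)) xs) * exp (mu * sum_list (map diameter xs))"
          using mult_left_mono[OF e prod_opn_nonneg[OF fx]] by simp
        also have "\<dots> = prod_list (map w xs)" unfolding w_def by (rule prod_w[symmetric])
        finally show ?thesis .
      qed
      then show "(if conn Z xs then 2 ^ n * opnorm D Z Q * prod_list (map (\<lambda>X. opnorm D X (\<Phi> X)) xs) else 0)
          \<le> 2 ^ n * opnorm D Z Q * (if conn Z xs then prod_list (map w xs) else 0)"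
        using opnorm_nonneg[OF Z] by (simp add: mult_left_mono)
    qed
    also have "\<dots> = 2 ^ n * opnorm D Z Q * (\<Sum>xs\<in>?L. if conn Z xs then prod_list (map w xs) else 0)"
      by (rule sum_distrib_left[symmetric])
    also have "\<dots> \<le> 2 ^ n * opnorm D Z Q * (Phn ^ n * ?M)"
      using comb opnorm_nonneg[OF Z] by (intro mult_left_mono) auto
    finally have "opnorm D W (?F n) \<le> cmod ((\<i> * s) ^ n / of_nat (fact n)) * (2 ^ n * opnorm D Z Q * (Phn ^ n * ?M))"
      by (simp add: mult_left_mono)
    also have "\<dots> = K * x ^ n" unfolding K_def x_def by (rule term_scalar[OF lam])
    finally show ?thesis .
  qed
  have "opnorm D W (gam D W (ham \<Phi> Y) s (emb Z Q)) \<le> K * (1 / (1 - x))"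
  proof (rule opnorm_suminf_le[OF W])
    show "(\<lambda>n. ?F n \<sigma> \<tau>) sums gam D W (ham \<Phi> Y) s (emb Z Q) \<sigma> \<tau>"
      if "\<sigma> \<in> cfgs D W" "\<tau> \<in> cfgs D W" for \<sigma> \<tau> by (rule gam_sums[OF W that])
    fix N
    have "opnorm D W (\<lambda>\<sigma> \<tau>. \<Sum>n<N. ?F n \<sigma> \<tau>) \<le> (\<Sum>n<N. opnorm D W (?F n))" by (rule opnorm_sum[OF W])
    also have "\<dots> \<le> (\<Sum>n<N. K * x ^ n)" by (intro sum_mono key)
    also have "\<dots> = K * (\<Sum>n<N. x ^ n)" by (simp add: sum_distrib_left)
    also have "\<dots> \<le> K * (1 / (1 - x))" by (intro mult_left_mono geo_le x0 x1 K0)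
    finally show "opnorm D W (\<lambda>\<sigma> \<tau>. \<Sum>n<N. ?F n \<sigma> \<tau>) \<le> K * (1 / (1 - x))" .
  qed
  also have "K * (1 / (1 - x)) = K * (lam / (lam - 2 * Phn * cmod s))"
    using lam x1 by (simp add: x_def field_simps)
  finally show ?thesis unfolding W_def K_def Phn_def .
qed



lemma part2:
  fixes \<Phi> :: "'v::metric_space set \<Rightarrow> 'v mat" and Q :: "'v mat"
  assumes mu: "mu \<ge> 0" and fin_e: "inorm_e D lam mu \<Phi> < \<infinity>" and Z: "finite Z" and Y': "finite Y'"
    and ZY: "Z \<subseteq> Y" and YY: "Y \<subseteq> Y'"
    and small: "2 * inorm D lam mu \<Phi> * cmod s < lam"
  shows "opnorm D Y' (\<lambda>\<sigma> \<tau>. gam D Y' (ham \<Phi> Y') s (emb Z Q) \<sigma> \<tau> - gam D Y' (ham \<Phi> Y) s (emb Z Q) \<sigma> \<tau>)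
      \<le> opnorm D Z Q * exp (lam * real (card Z))
         * (2 * inorm D lam mu \<Phi> * cmod s * lam / (lam - 2 * inorm D lam mu \<Phi> * cmod s)\<^sup>2)
         * exp (- mu * setdist Z (- Y))"
proof -
  define W where "W = Y'"
  define Phn where "Phn = inorm D lam mu \<Phi>"
  define x where "x = 2 * Phn * cmod s / lam"
  define K where "K = opnorm D Z Q * exp (lam * real (card Z))"
  define E where "E = exp (- mu * setdist Z (- Y))"
  define w where "w X = opnorm D X (\<Phi> X) * exp (mu * diameter X)" for X
  have W: "finite W" using Y' by (simp add: W_def)
  have Y: "finite Y" using Y' YY finite_subset by blast
  have ZW: "Z \<subseteq> W" and YW: "Y \<subseteq> W" using ZY YY by (auto simp: W_def)
  have Phn: "0 \<le> Phn" by (simp add: Phn_def inorm_nonneg)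
  have lam: "lam > 0" using small Phn by (smt (verit) Phn_def mult_nonneg_nonneg norm_ge_zero)
  have x0: "0 \<le> x" using Phn lam by (simp add: x_def)
  have x1: "x < 1" using small lam by (simp add: x_def Phn_def)
  have K0: "0 \<le> K" using opnorm_nonneg[OF Z] by (simp add: K_def)
  have E0: "0 \<le> E" by (simp add: E_def)
  let ?G = "\<lambda>Y n. adpow D W (ham \<Phi> Y) n (emb Z Q)"
  let ?F = "\<lambda>n. (\<lambda>\<sigma> \<tau>. ((\<i> * s) ^ n / of_nat (fact n)) * (?G Y' n \<sigma> \<tau> - ?G Y n \<sigma> \<tau>))"
  have key: "opnorm D W (?F n) \<le> K * E * (if n = 0 then 0 else x ^ n)" for n
  proof -
    let ?L' = "{xs. set xs \<subseteq> Pow Y' \<and> length xs = n}"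
    let ?L = "{xs. set xs \<subseteq> Pow Y \<and> length xs = n}"
    let ?M = "exp (lam * real (card Z)) * fact n / lam ^ n"
    let ?opn = "\<lambda>xs. prod_list (map (\<lambda>X. opnorm D X (\<Phi> X)) xs)"
    have L'fin: "finite ?L'" using Y' by (simp add: finite_lists_length_eq)
    have LL': "?L \<subseteq> ?L'" using YY by auto
    have Dfin: "finite (?L' - ?L)" using L'fin by simp
    have Ds: "set xs \<subseteq> Pow W \<and> length xs = n" if "xs \<in> ?L' - ?L" for xs using that by (auto simp: W_def)
    have diff: "(\<lambda>\<sigma> \<tau>. ?G Y' n \<sigma> \<tau> - ?G Y n \<sigma> \<tau>) = (\<lambda>\<sigma> \<tau>. \<Sum>xs\<in>?L' - ?L. chain D W \<Phi> (emb Z Q) xs \<sigma> \<tau>)"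
      unfolding adpow_chain[OF Y'] adpow_chain[OF Y] by (simp add: sum_diff[OF L'fin LL'])
    have cnorm: "opnorm D W (\<lambda>\<sigma> \<tau>. ?G Y' n \<sigma> \<tau> - ?G Y n \<sigma> \<tau>)
        \<le> (\<Sum>xs\<in>?L' - ?L. if conn Z xs then 2 ^ n * opnorm D Z Q * ?opn xs else 0)"
      unfolding diff by (rule chain_sum_bound[OF W ZW Dfin Ds])
    have sc: "opnorm D W (?F n) \<le> cmod ((\<i> * s) ^ n / of_nat (fact n)) * opnorm D W (\<lambda>\<sigma> \<tau>. ?G Y' n \<sigma> \<tau> - ?G Y n \<sigma> \<tau>)"
      by (rule opnorm_scale[OF W])
    show ?thesis
    proof (cases "n = 0")
      case True
      then have e: "?L' - ?L = {}" by auto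
      have "opnorm D W (\<lambda>\<sigma> \<tau>. ?G Y' n \<sigma> \<tau> - ?G Y n \<sigma> \<tau>) \<le> 0" using cnorm unfolding e sum.empty .
      then show ?thesis using sc True by (simp add: mult_le_0_iff)
    next
      case False
      have comb: "(\<Sum>xs\<in>?L'. if conn Z xs then prod_list (map w xs) else 0) \<le> Phn ^ n * ?M"
      proof (rule comb_bound[where lam = lam])
        show "finite (Pow Y')" using Y' by simp
        show "finite X" if "X \<in> Pow Y'" for X using that Y' finite_subset by blast
        show "0 \<le> w X" if "X \<in> Pow Y'" for X
          using that Y' by (simp add: w_def opnorm_nonneg finite_subset)
        show "(\<Sum>X\<in>Pow Y'. if y \<in> X then w X * exp (lam * real (card X)) else 0) \<le> Phn" for y
          unfolding w_def Phn_def by (rule Hx_inorm[OF fin_e]) (use Y' finite_subset in auto)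
        show "0 \<le> Phn" by (rule Phn)
        show "finite Z" by (rule Z)
        show "(real (card Z) + real k) ^ n * exp (- lam * real k) \<le> ?M" for k by (rule M_bound[OF lam])
      qed
      have wnn: "0 \<le> (if conn Z xs then prod_list (map w xs) else 0)" if "xs \<in> ?L'" for xs
      proof -
        have fx: "\<And>X. X \<in> set xs \<Longrightarrow> finite X" using that Y' finite_subset by auto
        have "0 \<le> prod_list (map w xs)" unfolding w_def prod_w
          using prod_opn_nonneg[OF fx] by simp
        then show ?thesis by simp
      qed
      have "(\<Sum>xs\<in>?L' - ?L. if conn Z xs then 2 ^ n * opnorm D Z Q * ?opn xs else 0)
          \<le> (\<Sum>xs\<in>?L' - ?L. 2 ^ n * (opnorm D Z Q * E) * (if conn Z xs then prod_list (map w xs) else 0))"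
      proof (rule sum_mono)
        fix xs assume xs: "xs \<in> ?L' - ?L"
        have fx: "\<And>X. X \<in> set xs \<Longrightarrow> finite X" using xs Y' finite_subset by auto
        show "(if conn Z xs then 2 ^ n * opnorm D Z Q * ?opn xs else 0)
            \<le> 2 ^ n * (opnorm D Z Q * E) * (if conn Z xs then prod_list (map w xs) else 0)"
        proof (cases "conn Z xs")
          case False then show ?thesis by simp
        next
          case True
          obtain X p where X: "X \<in> set xs" "p \<in> X" "p \<notin> Y" using xs by auto
          obtain z where z: "z \<in> Z" "dist z p \<le> sum_list (map diameter xs)"
            using conn_dist[OF True fx, of p] X by auto
          have d: "setdist Z (- Y) \<le> sum_list (map diameter xs)"
            using setdist_le_dist[OF z(1), of p "- Y"] X z by simp
          have pw: "prod_list (map w xs) = ?opn xs * exp (mu * sum_list (map diameter xs))"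
            unfolding w_def by (rule prod_w)
          have "?opn xs = prod_list (map w xs) * exp (- mu * sum_list (map diameter xs))"
            unfolding pw by (simp add: mult.assoc exp_add[symmetric])
          also have "\<dots> \<le> prod_list (map w xs) * E"
          proof (rule mult_left_mono)
            show "exp (- mu * sum_list (map diameter xs)) \<le> E"
              unfolding E_def using d mu by (simp add: mult_left_mono)
            show "0 \<le> prod_list (map w xs)" unfolding pw using prod_opn_nonneg[OF fx] by simp
          qed
          finally have "?opn xs \<le> prod_list (map w xs) * E" .
          then have "2 ^ n * opnorm D Z Q * ?opn xs \<le> 2 ^ n * opnorm D Z Q * (prod_list (map w xs) * E)"
            using opnorm_nonneg[OF Z] by (intro mult_left_mono) auto
          then show ?thesis using True by (simp add: mult_ac)
        qed
      qed
      also have "\<dots> \<le> (\<Sum>xs\<in>?L'. 2 ^ n * (opnorm D Z Q * E) * (if conn Z xs then prod_list (map w xs) else 0))"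
        by (rule sum_mono2[OF L'fin]) (use wnn opnorm_nonneg[OF Z] E0 in auto)
      also have "\<dots> = 2 ^ n * (opnorm D Z Q * E) * (\<Sum>xs\<in>?L'. if conn Z xs then prod_list (map w xs) else 0)"
        by (rule sum_distrib_left[symmetric])
      also have "\<dots> \<le> 2 ^ n * (opnorm D Z Q * E) * (Phn ^ n * ?M)"
        using comb opnorm_nonneg[OF Z] E0 by (intro mult_left_mono) auto
      finally have "opnorm D W (?F n) \<le> cmod ((\<i> * s) ^ n / of_nat (fact n)) * (2 ^ n * (opnorm D Z Q * E) * (Phn ^ n * ?M))"
        using sc cnorm by (meson mult_left_mono norm_ge_zero order_trans)
      also have "\<dots> = opnorm D Z Q * E * exp (lam * real (card Z)) * x ^ n"
        unfolding x_def by (rule term_scalar[OF lam])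
      finally show ?thesis using False by (simp add: K_def mult_ac)
    qed
  qed
  have "opnorm D W (\<lambda>\<sigma> \<tau>. gam D W (ham \<Phi> Y') s (emb Z Q) \<sigma> \<tau> - gam D W (ham \<Phi> Y) s (emb Z Q) \<sigma> \<tau>)
      \<le> K * E * (x / (1 - x))"
  proof (rule opnorm_suminf_le[OF W])
    fix \<sigma> \<tau> assume st: "\<sigma> \<in> cfgs D W" "\<tau> \<in> cfgs D W"
    show "(\<lambda>n. ?F n \<sigma> \<tau>) sums (gam D W (ham \<Phi> Y') s (emb Z Q) \<sigma> \<tau> - gam D W (ham \<Phi> Y) s (emb Z Q) \<sigma> \<tau>)"
      using sums_diff[OF gam_sums[OF W st, where H = "ham \<Phi> Y'"] gam_sums[OF W st, where H = "ham \<Phi> Y"]]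
      by (simp add: right_diff_distrib)
  next
    fix N
    have "opnorm D W (\<lambda>\<sigma> \<tau>. \<Sum>n<N. ?F n \<sigma> \<tau>) \<le> (\<Sum>n<N. opnorm D W (?F n))" by (rule opnorm_sum[OF W])
    also have "\<dots> \<le> (\<Sum>n<N. K * E * (if n = 0 then 0 else x ^ n))" by (intro sum_mono key)
    also have "\<dots> = K * E * (\<Sum>n<N. if n = 0 then 0 else x ^ n)" by (simp add: sum_distrib_left)
    also have "\<dots> \<le> K * E * (x / (1 - x))" using K0 E0 by (intro mult_left_mono geo_le1 x0 x1) auto
    finally show "opnorm D W (\<lambda>\<sigma> \<tau>. \<Sum>n<N. ?F n \<sigma> \<tau>) \<le> K * E * (x / (1 - x))" .
  qed
  also have "\<dots> \<le> K * E * (x / (1 - x)\<^sup>2)"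
  proof (intro mult_left_mono)
    have "(1 - x)\<^sup>2 \<le> 1 - x" using x0 x1 by (simp add: power2_eq_square mult_le_cancel_right1)
    then show "x / (1 - x) \<le> x / (1 - x)\<^sup>2" using x0 x1 by (intro divide_left_mono) auto
  qed (use K0 E0 in auto)
  also have "x / (1 - x)\<^sup>2 = 2 * Phn * cmod s * lam / (lam - 2 * Phn * cmod s)\<^sup>2"
    using lam x1 by (simp add: x_def field_simps power2_eq_square)
  finally show ?thesis unfolding W_def K_def E_def Phn_def by (simp add: mult_ac)
qed

theorem proposition2p1:
  fixes D :: nat and lam mu :: real and \<Phi> :: "'v::metric_space set \<Rightarrow> 'v mat"
    and Q :: "'v mat" and Z Y Y' :: "'v set" and s :: complex
  assumes "D > 0" and "lam \<ge> 0" and "mu \<ge> 0"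
    and "\<forall>X. finite X \<longrightarrow> (\<forall>\<sigma>\<in>cfgs D X. \<forall>\<tau>\<in>cfgs D X. \<Phi> X \<sigma> \<tau> = cnj (\<Phi> X \<tau> \<sigma>))"
    and "inorm_e D lam mu \<Phi> < \<infinity>"
    and "finite Z"
  shows "(finite Y \<longrightarrow> 2 * inorm D lam mu \<Phi> * cmod s < lam \<longrightarrow>
            opnorm D (Y \<union> Z) (gam D (Y \<union> Z) (ham \<Phi> Y) s (emb Z Q))
              \<le> opnorm D Z Q * exp (lam * real (card Z))
                 * (lam / (lam - 2 * inorm D lam mu \<Phi> * cmod s)))
       \<and> (finite Y' \<longrightarrow> Z \<subseteq> Y \<longrightarrow> Y \<subseteq> Y' \<longrightarrow> 2 * inorm D lam mu \<Phi> * cmod s < lam \<longrightarrow>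
            opnorm D Y' (\<lambda>\<sigma> \<tau>. gam D Y' (ham \<Phi> Y') s (emb Z Q) \<sigma> \<tau>
                               - gam D Y' (ham \<Phi> Y) s (emb Z Q) \<sigma> \<tau>)
              \<le> opnorm D Z Q * exp (lam * real (card Z))
                 * (2 * inorm D lam mu \<Phi> * cmod s * lam
                    / (lam - 2 * inorm D lam mu \<Phi> * cmod s)\<^sup>2)
                 * exp (- mu * setdist Z (- Y)))"
  using part1[OF assms(3,5,6)] part2[OF assms(3,5,6)] by blast

end
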